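(* Let $\alpha>0$ and let $\mu$ be a positive Borel measure on $\mathbb{C}$ satisfying condition (M). Then the Toeplitz operator $T_\mu$ is compact on $F^\infty_\alpha$ if and only if $\tilde{\mu}_1\in C_0(\mathbb{C})$.
   Context: $F^\infty_\alpha$ is the space of entire functions $f$ with $\|f\|_{\infty,\alpha}=\sup_{z}|f(z)|e^{-\alpha|z|^2/2}<\infty$. $K_z(w)=e^{\alpha\bar z w}$. $\mu$ satisfies condition (M) if $\int_{\mathbb{C}}|K_z(w)|^2e^{-\alpha|w|^2}\,d\mu(w)<\infty$ for all $z$. $T_\mu f(z)=\int_{\mathbb{C}}f(w)\overline{K_z(w)}e^{-\alpha|w|^2}\,d\mu(w)$. $\tilde{\mu}_1(z)=\frac{\alpha}{\pi}\int_{\mathbb{C}}e^{-\alpha|z-w|^2/2}\,d\mu(w)$. $C_0(\mathbb{C})$ is the space of continuous functions on $\mathbb{C}$ tending to $0$ at infinity. *)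

theory Defs
  imports "HOL-Analysis.Analysis"
begin

definition fock_kernel :: "real \<Rightarrow> complex \<Rightarrow> complex \<Rightarrow> complex" where
  "fock_kernel \<alpha> z w = exp (complex_of_real \<alpha> * cnj z * w)"

definition fock_inf_norm :: "real \<Rightarrow> (complex \<Rightarrow> complex) \<Rightarrow> real" where
  "fock_inf_norm \<alpha> f = (SUP z. cmod (f z) * exp (- \<alpha> * (cmod z)\<^sup>2 / 2))"

definition fock_inf :: "real \<Rightarrow> (complex \<Rightarrow> complex) set" where
  "fock_inf \<alpha> = {f. f holomorphic_on UNIV \<and>
      bdd_above (range (\<lambda>z. cmod (f z) * exp (- \<alpha> * (cmod z)\<^sup>2 / 2)))}"

definition condition_M :: "real \<Rightarrow> complex measure \<Rightarrow> bool" where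
  "condition_M \<alpha> \<mu> \<longleftrightarrow> (\<forall>z. (\<integral>\<^sup>+ w. ennreal ((cmod (fock_kernel \<alpha> z w))\<^sup>2
        * exp (- \<alpha> * (cmod w)\<^sup>2)) \<partial>\<mu>) < \<infinity>)"

definition toeplitz :: "real \<Rightarrow> complex measure \<Rightarrow> (complex \<Rightarrow> complex) \<Rightarrow> complex \<Rightarrow> complex" where
  "toeplitz \<alpha> \<mu> f z = (LINT w|\<mu>. f w * cnj (fock_kernel \<alpha> z w)
        * complex_of_real (exp (- \<alpha> * (cmod w)\<^sup>2)))"

definition mu_tilde1 :: "real \<Rightarrow> complex measure \<Rightarrow> complex \<Rightarrow> ennreal" where
  "mu_tilde1 \<alpha> \<mu> z = ennreal (\<alpha> / pi) *
      (\<integral>\<^sup>+ w. ennreal (exp (- \<alpha> * (cmod (z - w))\<^sup>2 / 2)) \<partial>\<mu>)"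

definition in_C0 :: "(complex \<Rightarrow> ennreal) \<Rightarrow> bool" where
  "in_C0 g \<longleftrightarrow> (\<forall>z. g z < \<infinity>) \<and> continuous_on UNIV (\<lambda>z. enn2real (g z))
      \<and> ((\<lambda>z. enn2real (g z)) \<longlongrightarrow> 0) at_infinity"

definition fock_inf_compact :: "real \<Rightarrow> ((complex \<Rightarrow> complex) \<Rightarrow> (complex \<Rightarrow> complex)) \<Rightarrow> bool" where
  "fock_inf_compact \<alpha> T \<longleftrightarrow> (\<forall>f\<in>fock_inf \<alpha>. T f \<in> fock_inf \<alpha>) \<and>
     (\<forall>fs. (\<forall>n. fs n \<in> fock_inf \<alpha>) \<and> bdd_above (range (\<lambda>n. fock_inf_norm \<alpha> (fs n))) \<longrightarrow>
        (\<exists>(r::nat \<Rightarrow> nat) g. strict_mono r \<and> g \<in> fock_inf \<alpha> \<and>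
           (\<lambda>k. fock_inf_norm \<alpha> (\<lambda>z. T (fs (r k)) z - g z)) \<longlonglongrightarrow> 0))"

end

theory Submission
  imports Defs "HOL-Complex_Analysis.Complex_Analysis" "HOL-Library.Nat_Bijection"
begin

locale fock =
  fixes \<alpha> :: real and \<mu> :: "complex measure"
  assumes apos: "\<alpha> > 0" and sets_mu: "sets \<mu> = sets borel" and condM: "condition_M \<alpha> \<mu>"
begin

lemma meas_mu: "f \<in> borel_measurable borel \<Longrightarrow> f \<in> borel_measurable \<mu>"
  by (subst measurable_cong_sets[OF sets_mu refl]) simp

lemma space_mu[simp]: "space \<mu> = UNIV"
  using sets_eq_imp_space_eq[OF sets_mu] by simp

definition gk :: "complex \<Rightarrow> complex \<Rightarrow> real" where
  "gk p v = exp (- \<alpha> * (cmod (p - v))\<^sup>2 / 2)"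

definition S4 :: "real \<Rightarrow> complex \<Rightarrow> real" where
  "S4 r v = gk (Complex r r) v + gk (Complex r (-r)) v + gk (Complex (-r) r) v + gk (Complex (-r) (-r)) v"

lemma gk_pos: "gk p v > 0" by (simp add: gk_def)
lemma gk_le1: "gk p v \<le> 1" using apos by (simp add: gk_def)
lemma S4_nonneg: "S4 r v \<ge> 0" unfolding S4_def using gk_pos[of _ v] by (simp add: add_nonneg_nonneg less_imp_le)

lemma gk_meas[measurable]: "(\<lambda>v. gk p v) \<in> borel_measurable borel"
  unfolding gk_def by measurable
lemma gk_meas2[measurable]: "(\<lambda>v. gk v w) \<in> borel_measurable borel"
  unfolding gk_def by measurable

lemma sq_Complex: "(cmod (Complex a b - v))\<^sup>2 = (a - Re v)\<^sup>2 + (b - Im v)\<^sup>2"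
  by (simp add: cmod_power2)

lemma exp_sgn_term:
  assumes "ax * ax = 1" "ay * ay = 1"
  shows "exp (\<alpha> * r\<^sup>2) * gk (Complex (r * ax) (r * ay)) v
      = exp (- \<alpha> * (cmod v)\<^sup>2 / 2 + \<alpha> * r * (ax * Re v + ay * Im v))"
proof -
  have a1: "(r * ax)\<^sup>2 = r\<^sup>2" "(r * ay)\<^sup>2 = r\<^sup>2" using assms by (simp_all add: power_mult_distrib power2_eq_square)
  have q1: "(cmod (Complex (r * ax) (r * ay) - v))\<^sup>2 = 2*r\<^sup>2 - 2*r*(ax * Re v + ay * Im v) + (cmod v)\<^sup>2"
  proof -
    have b1: "(r * ax - Re v)\<^sup>2 = r\<^sup>2 - 2 * r * ax * Re v + (Re v)\<^sup>2"
      unfolding power2_diff a1 by simp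
    have b2: "(r * ay - Im v)\<^sup>2 = r\<^sup>2 - 2 * r * ay * Im v + (Im v)\<^sup>2"
      unfolding power2_diff a1 by simp
    show ?thesis unfolding sq_Complex b1 b2 by (simp add: cmod_power2 algebra_simps)
  qed
  have "\<alpha> * r\<^sup>2 + (- \<alpha> * (cmod (Complex (r * ax) (r * ay) - v))\<^sup>2 / 2)
     = - \<alpha> * (cmod v)\<^sup>2 / 2 + \<alpha> * r * (ax * Re v + ay * Im v)"
    unfolding q1 by (simp add: field_simps)
  then show ?thesis unfolding gk_def by (simp add: mult_exp_exp)
qed

lemma core_bound:
  assumes r: "r \<ge> 0"
  shows "exp (- \<alpha> * (cmod v)\<^sup>2 / 2 + \<alpha> * r * (\<bar>Re v\<bar> + \<bar>Im v\<bar>)) \<le> exp (\<alpha> * r\<^sup>2) * S4 r v"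
proof -
  have g: "\<And>p. gk p v \<ge> 0" using gk_pos less_imp_le by blast
  define ax :: real where "ax = (if Re v \<ge> 0 then 1 else -1)"
  define ay :: real where "ay = (if Im v \<ge> 0 then 1 else -1)"
  have e: "\<bar>Re v\<bar> + \<bar>Im v\<bar> = ax * Re v + ay * Im v" unfolding ax_def ay_def by auto
  have "exp (- \<alpha> * (cmod v)\<^sup>2 / 2 + \<alpha> * r * (\<bar>Re v\<bar> + \<bar>Im v\<bar>)) = exp (\<alpha> * r\<^sup>2) * gk (Complex (r * ax) (r * ay)) v"
    by (subst exp_sgn_term) (auto simp: ax_def ay_def e)
  also have "\<dots> \<le> exp (\<alpha> * r\<^sup>2) * S4 r v"
    unfolding S4_def using g by (intro mult_left_mono) (auto simp: ax_def ay_def)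
  finally show ?thesis .
qed

lemma bound_norm:
  assumes r: "r \<ge> 0"
  shows "exp (- \<alpha> * (cmod v)\<^sup>2 / 2 + \<alpha> * r * cmod v) \<le> exp (\<alpha> * r\<^sup>2) * S4 r v"
proof -
  have "cmod v \<le> \<bar>Re v\<bar> + \<bar>Im v\<bar>" by (rule cmod_le)
  then have "\<alpha> * r * cmod v \<le> \<alpha> * r * (\<bar>Re v\<bar> + \<bar>Im v\<bar>)"
    using apos r by (intro mult_left_mono) auto
  then have "exp (- \<alpha> * (cmod v)\<^sup>2 / 2 + \<alpha> * r * cmod v) \<le> exp (- \<alpha> * (cmod v)\<^sup>2 / 2 + \<alpha> * r * (\<bar>Re v\<bar> + \<bar>Im v\<bar>))"
    by simp
  also have "\<dots> \<le> exp (\<alpha> * r\<^sup>2) * S4 r v" by (rule core_bound[OF r])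
  finally show ?thesis .
qed

lemma gk_bound:
  assumes "cmod q \<le> r"
  shows "gk q v \<le> exp (\<alpha> * r\<^sup>2) * S4 r v"
proof -
  have r: "r \<ge> 0" using assms norm_ge_zero order_trans by blast
  have "(cmod (q - v))\<^sup>2 = (cmod v)\<^sup>2 - 2 * Re (cnj q * v) + (cmod q)\<^sup>2"
    by (simp only: cmod_power2) (simp add: power2_eq_square algebra_simps)
  moreover have "Re (cnj q * v) \<le> cmod q * cmod v"
    by (metis complex_Re_le_cmod complex_mod_cnj norm_mult)
  ultimately have "(cmod (q - v))\<^sup>2 \<ge> (cmod v)\<^sup>2 - 2 * (cmod q * cmod v)"
    using zero_le_power2[of "cmod q"] by linarith
  moreover have "cmod q * cmod v \<le> r * cmod v" using assms by (simp add: mult_right_mono)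
  ultimately have "(cmod (q - v))\<^sup>2 \<ge> (cmod v)\<^sup>2 - 2 * r * cmod v" by linarith
  then have "\<alpha> * (cmod (q - v))\<^sup>2 \<ge> \<alpha> * ((cmod v)\<^sup>2 - 2 * r * cmod v)"
    using apos by (intro mult_left_mono) auto
  then have "- \<alpha> * (cmod (q - v))\<^sup>2 / 2 \<le> - \<alpha> * (cmod v)\<^sup>2 / 2 + \<alpha> * r * cmod v"
    by (simp add: algebra_simps)
  then have "gk q v \<le> exp (- \<alpha> * (cmod v)\<^sup>2 / 2 + \<alpha> * r * cmod v)" unfolding gk_def by simp
  also have "\<dots> \<le> exp (\<alpha> * r\<^sup>2) * S4 r v" by (rule bound_norm[OF r])
  finally show ?thesis .
qed

lemma gk_shift: "gk q v = gk (q - c) (v - c)"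
  unfolding gk_def by (simp add: algebra_simps)

lemma kern_norm: "cmod (fock_kernel \<alpha> z w) = exp (\<alpha> * Re (cnj z * w))"
  unfolding fock_kernel_def by (simp add: norm_exp_eq_Re algebra_simps)

lemma key_mod:
  "cmod (cnj (fock_kernel \<alpha> z w)) * exp (- \<alpha> * (cmod w)\<^sup>2) * exp (- \<alpha> * (cmod z)\<^sup>2 / 2)
     = exp (- \<alpha> * (cmod w)\<^sup>2 / 2) * gk z w"
proof -
  have "(cmod (z - w))\<^sup>2 = (cmod w)\<^sup>2 - 2 * Re (cnj z * w) + (cmod z)\<^sup>2"
    by (simp only: cmod_power2) (simp add: power2_eq_square algebra_simps)
  then have h: "Re (cnj z * w) = ((cmod w)\<^sup>2 + (cmod z)\<^sup>2 - (cmod (z - w))\<^sup>2) / 2" by simp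
  have "\<alpha> * Re (cnj z * w) + (- \<alpha> * (cmod w)\<^sup>2) + (- \<alpha> * (cmod z)\<^sup>2 / 2)
      = - \<alpha> * (cmod w)\<^sup>2 / 2 + (- \<alpha> * (cmod (z - w))\<^sup>2 / 2)"
    unfolding h by (simp add: field_simps)
  then show ?thesis unfolding complex_mod_cnj kern_norm gk_def
    by (simp add: mult_exp_exp)
qed

end

context fock begin

definition G :: "complex \<Rightarrow> ennreal" where
  "G z = (\<integral>\<^sup>+ w. ennreal (gk z w) \<partial>\<mu>)"

lemma mu_tilde1_G: "mu_tilde1 \<alpha> \<mu> z = ennreal (\<alpha> / pi) * G z"
  unfolding mu_tilde1_def G_def gk_def by simp

definition tz :: "(complex \<Rightarrow> complex) \<Rightarrow> complex \<Rightarrow> complex \<Rightarrow> complex" where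
  "tz f z w = f w * cnj (fock_kernel \<alpha> z w) * complex_of_real (exp (- \<alpha> * (cmod w)\<^sup>2))"

lemma toeplitz_tz: "toeplitz \<alpha> \<mu> f z = integral\<^sup>L \<mu> (tz f z)"
  unfolding toeplitz_def tz_def by simp

lemma norm_tz: "norm (tz f z w) = cmod (f w) * exp (- \<alpha> * (cmod w)\<^sup>2 / 2) * gk z w * exp (\<alpha> * (cmod z)\<^sup>2 / 2)"
proof -
  have "norm (tz f z w) = cmod (f w) * (cmod (cnj (fock_kernel \<alpha> z w)) * exp (- \<alpha> * (cmod w)\<^sup>2))"
    unfolding tz_def by (simp add: norm_mult)
  also have "cmod (cnj (fock_kernel \<alpha> z w)) * exp (- \<alpha> * (cmod w)\<^sup>2)
     = exp (- \<alpha> * (cmod w)\<^sup>2 / 2) * gk z w * exp (\<alpha> * (cmod z)\<^sup>2 / 2)"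
    using key_mod[of z w] by (simp add: field_simps exp_minus)
  finally show ?thesis by (simp add: mult.assoc)
qed

lemma tz_meas[measurable]:
  assumes "f \<in> borel_measurable borel"
  shows "tz f z \<in> borel_measurable borel"
proof -
  have "(\<lambda>w. cnj (fock_kernel \<alpha> z w) * complex_of_real (exp (- \<alpha> * (cmod w)\<^sup>2))) \<in> borel_measurable borel"
    unfolding fock_kernel_def by (intro borel_measurable_continuous_onI continuous_intros)
  then show ?thesis unfolding tz_def using assms by (simp add: mult.assoc)
qed

end

locale fock_fin = fock +
  assumes Gfin: "\<And>z. G z < \<infinity>"
begin

lemma gk_int: "integrable \<mu> (gk p)"
  by (rule integrableI_bounded) (use Gfin[of p] in \<open>auto intro: meas_mu simp: G_def[symmetric] gk_pos less_imp_le\<close>)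

lemma gk_int': "integrable \<mu> (\<lambda>w. gk p (w - c))"
proof -
  have "(\<lambda>w. gk p (w - c)) = gk (p + c)" unfolding gk_def by (auto simp: algebra_simps)
  then show ?thesis using gk_int by simp
qed

lemma S4_int: "integrable \<mu> (\<lambda>w. S4 r (w - c))"
  unfolding S4_def by (intro Bochner_Integration.integrable_add gk_int')

definition Gr :: "complex \<Rightarrow> real" where "Gr z = integral\<^sup>L \<mu> (gk z)"

lemma G_Gr: "G z = ennreal (Gr z)"
  unfolding G_def Gr_def by (rule nn_integral_eq_integral[OF gk_int]) (simp add: gk_pos less_imp_le)

lemma Gr_nonneg: "Gr z \<ge> 0"
  unfolding Gr_def by (rule integral_nonneg_AE) (simp add: gk_pos less_imp_le)

lemma growth_int:
  assumes "r \<ge> 0"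
  shows "integrable \<mu> (\<lambda>w. exp (- \<alpha> * (cmod w)\<^sup>2 / 2 + \<alpha> * r * cmod w))"
proof (rule Bochner_Integration.integrable_bound[OF integrable_mult_right[OF S4_int[of r 0]]])
  show "(\<lambda>w. exp (- \<alpha> * (cmod w)\<^sup>2 / 2 + \<alpha> * r * cmod w)) \<in> borel_measurable \<mu>"
    by (intro meas_mu) measurable
  show "AE w in \<mu>. norm (exp (- \<alpha> * (cmod w)\<^sup>2 / 2 + \<alpha> * r * cmod w)) \<le> norm (exp (\<alpha> * r\<^sup>2) * S4 r (w - 0))"
    using bound_norm[OF assms] S4_nonneg by (simp add: abs_of_nonneg)
qed

lemma tz_int:
  assumes fm: "f \<in> borel_measurable borel" and fb: "\<And>w. cmod (f w) \<le> M * exp (\<alpha> * (cmod w)\<^sup>2 / 2)"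
  shows "integrable \<mu> (tz f z)"
proof (rule Bochner_Integration.integrable_bound[OF integrable_mult_right[OF gk_int[of z]]])
  show "tz f z \<in> borel_measurable \<mu>" by (intro meas_mu tz_meas fm)
  show "AE w in \<mu>. norm (tz f z w) \<le> norm ((M * exp (\<alpha> * (cmod z)\<^sup>2 / 2)) * gk z w)"
  proof (rule AE_I2)
    fix w
    have M: "M \<ge> 0" using fb[of 0] norm_ge_zero[of "f 0"] by (simp del: norm_ge_zero)
    have "norm (tz f z w) = (cmod (f w) * exp (- \<alpha> * (cmod w)\<^sup>2 / 2)) * gk z w * exp (\<alpha> * (cmod z)\<^sup>2 / 2)"
      by (simp add: norm_tz)
    also have "\<dots> \<le> M * gk z w * exp (\<alpha> * (cmod z)\<^sup>2 / 2)"
    proof -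
      have "cmod (f w) * exp (- \<alpha> * (cmod w)\<^sup>2 / 2) \<le> M"
        using fb[of w] by (simp add: exp_minus field_simps)
      then show ?thesis using gk_pos[of z w] by (intro mult_right_mono) auto
    qed
    also have "\<dots> = norm ((M * exp (\<alpha> * (cmod z)\<^sup>2 / 2)) * gk z w)"
      using M gk_pos[of z w] by (simp add: abs_of_nonneg)
    finally show "norm (tz f z w) \<le> norm ((M * exp (\<alpha> * (cmod z)\<^sup>2 / 2)) * gk z w)" .
  qed
qed

end

context fock_fin begin

definition phi :: "(complex \<Rightarrow> complex) \<Rightarrow> complex \<Rightarrow> real" where
  "phi f w = cmod (f w) * exp (- \<alpha> * (cmod w)\<^sup>2 / 2)"

lemma phi_nonneg: "phi f w \<ge> 0" unfolding phi_def by simp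

lemma phi_le: "cmod (f w) \<le> M * exp (\<alpha> * (cmod w)\<^sup>2 / 2) \<Longrightarrow> phi f w \<le> M"
  unfolding phi_def by (simp add: exp_minus field_simps)

lemma M_nonneg:
  assumes "\<And>w. cmod (f w) \<le> M * exp (\<alpha> * (cmod w)\<^sup>2 / 2)" shows "M \<ge> 0"
proof -
  have "cmod (f 0) \<le> M" using assms[of 0] by simp
  then show ?thesis using norm_ge_zero order_trans by blast
qed

lemma phi_gk_int:
  assumes fm: "f \<in> borel_measurable borel" and fb: "\<And>w. cmod (f w) \<le> M * exp (\<alpha> * (cmod w)\<^sup>2 / 2)"
  shows "integrable \<mu> (\<lambda>w. phi f w * gk z w)"
proof (rule Bochner_Integration.integrable_bound[OF integrable_mult_right[OF gk_int[of z], of M]])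
  show "(\<lambda>w. phi f w * gk z w) \<in> borel_measurable \<mu>"
    unfolding phi_def by (intro meas_mu) (use fm in measurable)
  show "AE w in \<mu>. norm (phi f w * gk z w) \<le> norm (M * gk z w)"
  proof (intro AE_I2)
    fix w
    have "phi f w \<le> M" by (rule phi_le[OF fb])
    then show "norm (phi f w * gk z w) \<le> norm (M * gk z w)"
      using phi_nonneg[of f w] gk_pos[of z w] M_nonneg[OF fb]
      by (simp add: abs_of_nonneg less_imp_le mult_right_mono)
  qed
qed

lemma toep_le:
  assumes fm: "f \<in> borel_measurable borel" and fb: "\<And>w. cmod (f w) \<le> M * exp (\<alpha> * (cmod w)\<^sup>2 / 2)"
  shows "cmod (toeplitz \<alpha> \<mu> f z) * exp (- \<alpha> * (cmod z)\<^sup>2 / 2) \<le> integral\<^sup>L \<mu> (\<lambda>w. phi f w * gk z w)"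
proof -
  have "cmod (toeplitz \<alpha> \<mu> f z) \<le> integral\<^sup>L \<mu> (\<lambda>w. norm (tz f z w))"
    unfolding toeplitz_tz by (rule integral_norm_bound)
  also have "\<dots> = integral\<^sup>L \<mu> (\<lambda>w. phi f w * gk z w * exp (\<alpha> * (cmod z)\<^sup>2 / 2))"
    by (simp add: norm_tz phi_def)
  also have "\<dots> = integral\<^sup>L \<mu> (\<lambda>w. phi f w * gk z w) * exp (\<alpha> * (cmod z)\<^sup>2 / 2)"
    by (rule integral_mult_left_zero)
  finally show ?thesis by (simp add: exp_minus field_simps)
qed

lemma toep_le_M:
  assumes fm: "f \<in> borel_measurable borel" and fb: "\<And>w. cmod (f w) \<le> M * exp (\<alpha> * (cmod w)\<^sup>2 / 2)"
  shows "cmod (toeplitz \<alpha> \<mu> f z) * exp (- \<alpha> * (cmod z)\<^sup>2 / 2) \<le> M * Gr z"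
proof -
  have "integral\<^sup>L \<mu> (\<lambda>w. phi f w * gk z w) \<le> integral\<^sup>L \<mu> (\<lambda>w. M * gk z w)"
    using gk_pos
    by (intro integral_mono phi_gk_int[OF fm fb] integrable_mult_right gk_int)
       (simp add: less_imp_le mult_right_mono phi_le[OF fb])
  then show ?thesis using toep_le[OF fm fb, of z] by (simp add: Gr_def)
qed

lemma toeplitz_sums:
  assumes fm: "f \<in> borel_measurable borel" and fb: "\<And>w. cmod (f w) \<le> M * exp (\<alpha> * (cmod w)\<^sup>2 / 2)"
  shows "(\<lambda>n. integral\<^sup>L \<mu> (\<lambda>w. f w * ((complex_of_real \<alpha> * cnj w) ^ n /\<^sub>R fact n) * complex_of_real (exp (- \<alpha> * (cmod w)\<^sup>2))) * z ^ n)
     sums toeplitz \<alpha> \<mu> f z"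
proof -
  define u where "u n w = f w * ((complex_of_real \<alpha> * cnj w) ^ n /\<^sub>R fact n) * complex_of_real (exp (- \<alpha> * (cmod w)\<^sup>2))" for n w
  define t where "t n w = u n w * z ^ n" for n w
  have M: "M \<ge> 0" by (rule M_nonneg[OF fb])
  define bnd where "bnd w = M * exp (- \<alpha> * (cmod w)\<^sup>2 / 2 + \<alpha> * cmod z * cmod w)" for w
  have bnd_int: "integrable \<mu> bnd" unfolding bnd_def by (intro integrable_mult_right growth_int) simp
  have sums_t: "(\<lambda>n. t n w) sums tz f z w" for w
  proof -
    have k: "cnj (fock_kernel \<alpha> z w) = exp (complex_of_real \<alpha> * z * cnj w)"
      unfolding fock_kernel_def exp_cnj by simp
    have "(\<lambda>n. (complex_of_real \<alpha> * z * cnj w) ^ n /\<^sub>R fact n) sums exp (complex_of_real \<alpha> * z * cnj w)"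
      by (rule exp_converges)
    then have "(\<lambda>n. f w * ((complex_of_real \<alpha> * z * cnj w) ^ n /\<^sub>R fact n) * complex_of_real (exp (- \<alpha> * (cmod w)\<^sup>2)))
        sums (f w * exp (complex_of_real \<alpha> * z * cnj w) * complex_of_real (exp (- \<alpha> * (cmod w)\<^sup>2)))"
      by (intro sums_mult sums_mult2)
    moreover have "f w * ((complex_of_real \<alpha> * z * cnj w) ^ n /\<^sub>R fact n) * complex_of_real (exp (- \<alpha> * (cmod w)\<^sup>2)) = t n w" for n
      unfolding t_def u_def by (simp add: power_mult_distrib scaleR_conv_of_real algebra_simps)
    ultimately show ?thesis unfolding tz_def k by simp
  qed
  have norm_t: "norm (t n w) = cmod (f w) * ((\<alpha> * cmod w * cmod z) ^ n /\<^sub>R fact n) * exp (- \<alpha> * (cmod w)\<^sup>2)" for n w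
    unfolding t_def u_def using apos
    by (simp add: norm_mult norm_power power_mult_distrib abs_of_pos)
  have sums_nt: "(\<lambda>n. norm (t n w)) sums (cmod (f w) * exp (\<alpha> * cmod w * cmod z) * exp (- \<alpha> * (cmod w)\<^sup>2))" for w
    unfolding norm_t by (intro sums_mult sums_mult2 exp_converges)
  have tot_le: "cmod (f w) * exp (\<alpha> * cmod w * cmod z) * exp (- \<alpha> * (cmod w)\<^sup>2) \<le> bnd w" for w
  proof -
    have "cmod (f w) * exp (\<alpha> * cmod w * cmod z) * exp (- \<alpha> * (cmod w)\<^sup>2)
        \<le> M * exp (\<alpha> * (cmod w)\<^sup>2 / 2) * exp (\<alpha> * cmod w * cmod z) * exp (- \<alpha> * (cmod w)\<^sup>2)"
      using fb[of w] by (intro mult_right_mono) auto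
    also have "\<dots> = bnd w" unfolding bnd_def by (simp add: mult_exp_exp algebra_simps)
    finally show ?thesis .
  qed
  have part_le: "(\<Sum>n\<in>I. norm (t n w)) \<le> bnd w" if "finite I" for I w
    using sum_le_suminf[OF sums_summable[OF sums_nt[of w]] that] sums_unique[OF sums_nt[of w]] tot_le[of w]
    by simp
  have t_meas: "t n \<in> borel_measurable \<mu>" for n
  proof -
    define g where "g = (\<lambda>w. ((complex_of_real \<alpha> * cnj w) ^ n /\<^sub>R fact n) * complex_of_real (exp (- \<alpha> * (cmod w)\<^sup>2)) * z ^ n)"
    have gm: "g \<in> borel_measurable borel"
      unfolding g_def by (intro borel_measurable_continuous_onI continuous_intros)
    have "(\<lambda>w. f w * g w) \<in> borel_measurable borel"
      using fm gm by measurable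
    moreover have "t n = (\<lambda>w. f w * g w)"
      unfolding t_def u_def g_def by (simp add: fun_eq_iff mult.assoc)
    ultimately show ?thesis by (simp add: meas_mu)
  qed
  have t_int: "integrable \<mu> (t n)" for n
  proof (rule Bochner_Integration.integrable_bound[OF bnd_int t_meas])
    show "AE w in \<mu>. norm (t n w) \<le> norm (bnd w)"
      using part_le[of "{n}"] M by (intro AE_I2) (simp add: bnd_def abs_of_nonneg)
  qed
  have summ: "summable (\<lambda>n. integral\<^sup>L \<mu> (\<lambda>w. norm (t n w)))"
  proof (rule summableI_nonneg_bounded)
    show "0 \<le> integral\<^sup>L \<mu> (\<lambda>w. norm (t n w))" for n by simp
    show "(\<Sum>n<N. integral\<^sup>L \<mu> (\<lambda>w. norm (t n w))) \<le> integral\<^sup>L \<mu> bnd" for N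
    proof -
      have "(\<Sum>n<N. integral\<^sup>L \<mu> (\<lambda>w. norm (t n w))) = integral\<^sup>L \<mu> (\<lambda>w. \<Sum>n<N. norm (t n w))"
        by (rule Bochner_Integration.integral_sum[symmetric]) (simp add: integrable_norm[OF t_int])
      also have "\<dots> \<le> integral\<^sup>L \<mu> bnd"
        using part_le by (intro integral_mono bnd_int) (auto intro!: t_int)
      finally show ?thesis .
    qed
  qed
  have AEs: "AE w in \<mu>. summable (\<lambda>n. norm (t n w))"
    using sums_nt by (auto intro: sums_summable)
  have "(\<lambda>n. integral\<^sup>L \<mu> (t n)) sums integral\<^sup>L \<mu> (\<lambda>w. \<Sum>n. t n w)"
    by (rule sums_integral[OF t_int AEs summ])
  moreover have "(\<lambda>w. \<Sum>n. t n w) = tz f z" using sums_t by (simp add: sums_iff)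
  moreover have "integral\<^sup>L \<mu> (t n) = integral\<^sup>L \<mu> (u n) * z ^ n" for n
    unfolding t_def by (rule integral_mult_left_zero)
  ultimately show ?thesis unfolding toeplitz_tz u_def by simp
qed

lemma toeplitz_holo:
  assumes fm: "f \<in> borel_measurable borel" and fb: "\<And>w. cmod (f w) \<le> M * exp (\<alpha> * (cmod w)\<^sup>2 / 2)"
  shows "toeplitz \<alpha> \<mu> f holomorphic_on UNIV"
proof -
  define c where "c n = integral\<^sup>L \<mu> (\<lambda>w. f w * ((complex_of_real \<alpha> * cnj w) ^ n /\<^sub>R fact n) * complex_of_real (exp (- \<alpha> * (cmod w)\<^sup>2)))" for n
  have s: "(\<lambda>n. c n * z ^ n) sums toeplitz \<alpha> \<mu> f z" for z
    unfolding c_def by (rule toeplitz_sums[OF fm fb])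
  have eq: "toeplitz \<alpha> \<mu> f = (\<lambda>z. \<Sum>n. c n * z ^ n)" using s by (auto simp: sums_iff)
  have "((\<lambda>z. \<Sum>n. c n * z ^ n) has_field_derivative (\<Sum>n. diffs c n * x ^ n)) (at x)" for x
    by (rule termdiffs_strong_converges_everywhere) (use s in \<open>auto intro: sums_summable\<close>)
  then show ?thesis unfolding eq
    by (auto simp: holomorphic_on_def field_differentiable_def intro: has_field_derivative_at_within)
qed

end

context fock begin

lemma fi_bdd: "f \<in> fock_inf \<alpha> \<Longrightarrow> bdd_above (range (\<lambda>z. cmod (f z) * exp (- \<alpha> * (cmod z)\<^sup>2 / 2)))"
  unfolding fock_inf_def by simp

lemma fi_holo: "f \<in> fock_inf \<alpha> \<Longrightarrow> f holomorphic_on UNIV"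
  unfolding fock_inf_def by simp

lemma holo_meas: "f holomorphic_on UNIV \<Longrightarrow> f \<in> borel_measurable borel"
  by (intro borel_measurable_continuous_onI holomorphic_on_imp_continuous_on)

lemma norm_upper_gen:
  "bdd_above (range (\<lambda>z. cmod (f z) * exp (- \<alpha> * (cmod z)\<^sup>2 / 2))) \<Longrightarrow>
   cmod (f z) * exp (- \<alpha> * (cmod z)\<^sup>2 / 2) \<le> fock_inf_norm \<alpha> f"
  unfolding fock_inf_norm_def by (rule cSUP_upper) auto

lemma norm_upper: "f \<in> fock_inf \<alpha> \<Longrightarrow> cmod (f z) * exp (- \<alpha> * (cmod z)\<^sup>2 / 2) \<le> fock_inf_norm \<alpha> f"
  by (rule norm_upper_gen[OF fi_bdd])

lemma norm_nonneg_gen: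
  "bdd_above (range (\<lambda>z. cmod (f z) * exp (- \<alpha> * (cmod z)\<^sup>2 / 2))) \<Longrightarrow> fock_inf_norm \<alpha> f \<ge> 0"
  using norm_upper_gen[of f 0] by (meson exp_ge_zero mult_nonneg_nonneg norm_ge_zero order_trans)

lemma norm_least:
  "(\<And>z. cmod (f z) * exp (- \<alpha> * (cmod z)\<^sup>2 / 2) \<le> C) \<Longrightarrow> fock_inf_norm \<alpha> f \<le> C"
  unfolding fock_inf_norm_def by (rule cSUP_least) auto

lemma fi_growth: "f \<in> fock_inf \<alpha> \<Longrightarrow> cmod (f w) \<le> fock_inf_norm \<alpha> f * exp (\<alpha> * (cmod w)\<^sup>2 / 2)"
  using norm_upper[of f w] by (simp add: exp_minus field_simps)

lemma growth_fi:
  assumes "f holomorphic_on UNIV" "\<And>w. cmod (f w) \<le> M * exp (\<alpha> * (cmod w)\<^sup>2 / 2)"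
  shows "f \<in> fock_inf \<alpha>"
  unfolding fock_inf_def using assms
  by (auto intro!: bdd_aboveI2[where M=M] simp: exp_minus field_simps)

end

context fock_fin begin

lemma toeplitz_fi:
  assumes f: "f \<in> fock_inf \<alpha>" and C: "\<And>z. Gr z \<le> C"
  shows "toeplitz \<alpha> \<mu> f \<in> fock_inf \<alpha>"
proof -
  have fm: "f \<in> borel_measurable borel" by (rule holo_meas[OF fi_holo[OF f]])
  note fb = fi_growth[OF f]
  have nn: "fock_inf_norm \<alpha> f \<ge> 0" by (rule norm_nonneg_gen[OF fi_bdd[OF f]])
  have "cmod (toeplitz \<alpha> \<mu> f z) * exp (- \<alpha> * (cmod z)\<^sup>2 / 2) \<le> fock_inf_norm \<alpha> f * C" for z
    using order_trans[OF toep_le_M[OF fm fb, of z] mult_left_mono[OF C[of z] nn]] .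
  then show ?thesis unfolding fock_inf_def
    using toeplitz_holo[OF fm fb] by (auto intro!: bdd_aboveI2)
qed

lemma tail_lim:
  fixes g :: "complex \<Rightarrow> real"
  assumes g: "integrable \<mu> g"
  shows "(\<lambda>n. integral\<^sup>L \<mu> (\<lambda>w. indicator {w. real n < cmod w} w * g w)) \<longlonglongrightarrow> 0"
proof -
  have "(\<lambda>n. integral\<^sup>L \<mu> (\<lambda>w. indicator {w. real n < cmod w} w * g w)) \<longlonglongrightarrow> integral\<^sup>L \<mu> (\<lambda>w. 0::real)"
  proof (rule integral_dominated_convergence[where w="\<lambda>w. norm (g w)"])
    show "(\<lambda>w. 0::real) \<in> borel_measurable \<mu>" by simp
    show "(\<lambda>w. indicator {w. real n < cmod w} w * g w) \<in> borel_measurable \<mu>" for n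
    proof -
      have "{w::complex. real n < cmod w} \<in> sets borel" by measurable
      then have "{w::complex. real n < cmod w} \<in> sets \<mu>" using sets_mu by simp
      then show ?thesis using borel_measurable_integrable[OF g] by measurable
    qed
    show "integrable \<mu> (\<lambda>w. norm (g w))" using g by simp
    show "AE x in \<mu>. (\<lambda>n. indicator {w. real n < cmod w} x * g x) \<longlonglongrightarrow> 0"
    proof (rule AE_I2)
      fix x
      obtain N where N: "cmod x < real N" using reals_Archimedean2 by blast
      have "eventually (\<lambda>n. indicator {w. real n < cmod w} x * g x = (0::real)) sequentially"
        unfolding eventually_sequentially
        by (rule exI[of _ N]) (use N in \<open>auto simp: indicator_def\<close>)
      then show "(\<lambda>n. indicator {w. real n < cmod w} x * g x) \<longlonglongrightarrow> 0"
        by (rule tendsto_eventually)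
    qed
    show "AE x in \<mu>. norm (indicator {w. real n < cmod w} x * g x) \<le> norm (g x)" for n
      by (intro AE_I2) (auto simp: indicator_def)
  qed
  then show ?thesis by simp
qed

end

locale fock_c0 = fock_fin +
  assumes Gr_cont: "continuous_on UNIV Gr" and Gr_lim: "(Gr \<longlongrightarrow> 0) at_infinity"
begin

lemma Gr_small:
  assumes "e > 0" obtains b where "\<And>z. b \<le> cmod z \<Longrightarrow> Gr z \<le> e"
proof -
  have "eventually (\<lambda>z. dist (Gr z) 0 < e) at_infinity" by (rule tendstoD[OF Gr_lim assms])
  then obtain b where "\<And>z. b \<le> cmod z \<Longrightarrow> dist (Gr z) 0 < e"
    unfolding eventually_at_infinity by auto
  then have "\<And>z. b \<le> cmod z \<Longrightarrow> Gr z \<le> e" by (force simp: dist_real_def abs_less_iff)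
  then show ?thesis using that by blast
qed

lemma Gr_bounded: obtains C where "C > 0" "\<And>z. Gr z \<le> C"
proof -
  obtain b where b: "\<And>z. b \<le> cmod z \<Longrightarrow> Gr z \<le> 1" using Gr_small[of 1] by auto
  have "compact (Gr ` cball 0 b)"
    by (rule compact_continuous_image[OF continuous_on_subset[OF Gr_cont] compact_cball]) auto
  then obtain B where B: "\<And>y. y \<in> Gr ` cball 0 b \<Longrightarrow> norm y \<le> B"
    using compact_imp_bounded[of "Gr ` cball 0 b"] unfolding bounded_iff by blast
  have "Gr z \<le> max 1 B + 1" for z
  proof (cases "b \<le> cmod z")
    case True then show ?thesis using b[of z] by simp
  next
    case False
    then have "z \<in> cball 0 b" by simp
    then have "norm (Gr z) \<le> B" using B by blast
    then show ?thesis by simp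
  qed
  moreover have "max 1 B + 1 > 0" by simp
  ultimately show ?thesis using that by blast
qed

lemma ind_int:
  fixes g :: "complex \<Rightarrow> real"
  assumes "integrable \<mu> g"
  shows "integrable \<mu> (\<lambda>w. indicator {w. R < cmod w} w * g w)"
proof -
  have "{w::complex. R < cmod w} \<in> sets borel" by measurable
  then have "{w::complex. R < cmod w} \<in> sets \<mu>" using sets_mu by simp
  from integrable_real_mult_indicator[OF this assms] show ?thesis by (simp add: mult.commute)
qed

lemma key_estimate:
  fixes fs :: "nat \<Rightarrow> complex \<Rightarrow> complex" and h0 :: "complex \<Rightarrow> complex"
  assumes M0: "M \<ge> 0"
    and fsm: "\<And>k. fs k \<in> borel_measurable borel" and h0m: "h0 \<in> borel_measurable borel"
    and fsb: "\<And>k w. cmod (fs k w - h0 w) \<le> (2 * M) * exp (\<alpha> * (cmod w)\<^sup>2 / 2)"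
    and un: "\<And>K. compact K \<Longrightarrow> uniform_limit K fs h0 sequentially"
    and e: "\<epsilon> > 0"
  shows "\<exists>N. \<forall>k\<ge>N. \<forall>z. integral\<^sup>L \<mu> (\<lambda>w. phi (\<lambda>w. fs k w - h0 w) w * gk z w) \<le> \<epsilon>"
proof -
  obtain C where C0: "C > 0" and C: "\<And>z. Gr z \<le> C" using Gr_bounded by metis
  obtain R0 where R0: "\<And>z. R0 \<le> cmod z \<Longrightarrow> Gr z \<le> \<epsilon> / (2 * M + 1)"
    using Gr_small[of "\<epsilon> / (2 * M + 1)"] e M0 by auto
  define R1 where "R1 = max R0 0"
  have R1: "R1 \<ge> 0" unfolding R1_def by simp
  define E where "E = exp (\<alpha> * R1\<^sup>2)"
  have E0: "E > 0" unfolding E_def by simp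
  define \<delta> where "\<delta> = \<epsilon> / (2 * (2 * M + 1) * E)"
  have \<delta>0: "\<delta> > 0" unfolding \<delta>_def using e M0 E0 by simp
  have tl: "(\<lambda>n. integral\<^sup>L \<mu> (\<lambda>w. indicator {w. real n < cmod w} w * S4 R1 w)) \<longlonglongrightarrow> 0"
    using tail_lim[OF S4_int[of R1 0]] by simp
  obtain n0 where n0: "norm (integral\<^sup>L \<mu> (\<lambda>w. indicator {w. real n0 < cmod w} w * S4 R1 w)) < \<delta>"
    using LIMSEQ_D[OF tl \<delta>0] by auto
  define R where "R = real n0"
  define T where "T = integral\<^sup>L \<mu> (\<lambda>w. indicator {w. R < cmod w} w * S4 R1 w)"
  have T: "T \<le> \<delta>" using n0 unfolding T_def R_def by simp
  define e1 where "e1 = \<epsilon> / (2 * C)"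
  have e1: "e1 > 0" unfolding e1_def using e C0 by simp
  have "eventually (\<lambda>k. \<forall>x\<in>cball 0 R. dist (fs k x) (h0 x) < e1) sequentially"
    using un[of "cball 0 R"] e1 unfolding uniform_limit_iff by auto
  then obtain N where N: "\<And>k x. k \<ge> N \<Longrightarrow> x \<in> cball 0 R \<Longrightarrow> dist (fs k x) (h0 x) < e1"
    unfolding eventually_sequentially by blast
  have main: "integral\<^sup>L \<mu> (\<lambda>w. phi (\<lambda>w. fs k w - h0 w) w * gk z w) \<le> \<epsilon>" if k: "k \<ge> N" for k z
  proof -
    define d where "d = (\<lambda>w. fs k w - h0 w)"
    have dm: "d \<in> borel_measurable borel" unfolding d_def using fsm h0m by measurable
    have db: "\<And>w. cmod (d w) \<le> (2 * M) * exp (\<alpha> * (cmod w)\<^sup>2 / 2)" unfolding d_def by (rule fsb)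
    have pl: "phi d w \<le> 2 * M" for w by (rule phi_le[OF db])
    have pint: "integrable \<mu> (\<lambda>w. phi d w * gk z w)" by (rule phi_gk_int[OF dm db])
    show ?thesis
    proof (cases "R0 \<le> cmod z")
      case True
      have "integral\<^sup>L \<mu> (\<lambda>w. phi d w * gk z w) \<le> integral\<^sup>L \<mu> (\<lambda>w. (2 * M) * gk z w)"
        using pl gk_pos by (intro integral_mono pint integrable_mult_right gk_int)
          (simp add: less_imp_le mult_right_mono)
      also have "\<dots> = (2 * M) * Gr z" unfolding Gr_def by simp
      also have "\<dots> \<le> (2 * M) * (\<epsilon> / (2 * M + 1))"
        using R0[OF True] M0 by (intro mult_left_mono) auto
      also have "\<dots> \<le> \<epsilon>" using e M0 by (simp add: field_simps)
      finally show ?thesis unfolding d_def .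
    next
      case False
      then have zR1: "cmod z \<le> R1" unfolding R1_def by simp
      have pw: "phi d w * gk z w \<le> e1 * gk z w + (2 * M) * (indicator {w. R < cmod w} w * gk z w)" for w
      proof (cases "R < cmod w")
        case True
        then show ?thesis using pl[of w] gk_pos[of z w] e1 by (simp add: less_imp_le mult_right_mono add_increasing)
      next
        case False
        then have "w \<in> cball 0 R" by simp
        then have "cmod (d w) < e1" using N[OF k] unfolding d_def by (simp add: dist_norm)
        moreover have "phi d w \<le> cmod (d w)" unfolding phi_def using apos
          by (simp add: mult_left_le)
        ultimately have "phi d w \<le> e1" by simp
        then show ?thesis using False gk_pos[of z w] by (simp add: less_imp_le mult_right_mono)
      qed
      have i1: "integrable \<mu> (\<lambda>w. indicator {w. R < cmod w} w * gk z w)" by (rule ind_int[OF gk_int])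
      have i2: "integrable \<mu> (\<lambda>w. indicator {w. R < cmod w} w * S4 R1 w)"
        using ind_int[OF S4_int[of R1 0]] by simp
      have "integral\<^sup>L \<mu> (\<lambda>w. phi d w * gk z w)
          \<le> integral\<^sup>L \<mu> (\<lambda>w. e1 * gk z w + (2 * M) * (indicator {w. R < cmod w} w * gk z w))"
        using pw by (intro integral_mono pint Bochner_Integration.integrable_add integrable_mult_right gk_int i1) auto
      also have "\<dots> = e1 * Gr z + (2 * M) * integral\<^sup>L \<mu> (\<lambda>w. indicator {w. R < cmod w} w * gk z w)"
        unfolding Gr_def using i1 gk_int by (simp add: Bochner_Integration.integral_add)
      also have "integral\<^sup>L \<mu> (\<lambda>w. indicator {w. R < cmod w} w * gk z w)
          \<le> integral\<^sup>L \<mu> (\<lambda>w. E * (indicator {w. R < cmod w} w * S4 R1 w))"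
        using gk_bound[OF zR1] unfolding E_def
        by (intro integral_mono i1 integrable_mult_right i2) (simp add: indicator_def)
      also have "\<dots> = E * T" unfolding T_def by simp
      finally have "integral\<^sup>L \<mu> (\<lambda>w. phi d w * gk z w) \<le> e1 * Gr z + 2 * M * (E * T)"
        using M0 by (simp add: mult_left_mono)
      also have "e1 * Gr z \<le> e1 * C" using C[of z] e1 by (simp add: mult_left_mono)
      also have "e1 * C = \<epsilon> / 2" unfolding e1_def using C0 by simp
      also have "2 * M * (E * T) \<le> 2 * M * (E * \<delta>)"
        using T M0 E0 by (simp add: mult_left_mono)
      also have "2 * M * (E * \<delta>) \<le> \<epsilon> / 2"
      proof -
        have q: "(2 * M) / (2 * (2 * M + 1)) \<le> 1 / 2" using M0 by (simp add: field_simps)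
        have "E * \<delta> = \<epsilon> / (2 * (2 * M + 1))"
        proof -
          have a0: "2 * (2 * M + 1) \<noteq> 0" using M0 by simp
          have "E * \<delta> = (E * \<epsilon>) / ((2 * (2 * M + 1)) * E)" unfolding \<delta>_def by simp
          also have "\<dots> = \<epsilon> / (2 * (2 * M + 1))" using E0 a0 by simp
          finally show ?thesis .
        qed
        then have "2 * M * (E * \<delta>) = \<epsilon> * ((2 * M) / (2 * (2 * M + 1)))"
          by simp
        also have "\<dots> \<le> \<epsilon> * (1 / 2)" using q e by (intro mult_left_mono) auto
        finally show ?thesis by simp
      qed
      finally show ?thesis unfolding d_def by simp
    qed
  qed
  then show ?thesis by blast
qed

lemma compact_T: "fock_inf_compact \<alpha> (toeplitz \<alpha> \<mu>)"
  unfolding fock_inf_compact_def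
proof (intro conjI allI impI ballI)
  obtain C where C0: "C > 0" and C: "\<And>z. Gr z \<le> C" using Gr_bounded by metis
  show "toeplitz \<alpha> \<mu> f \<in> fock_inf \<alpha>" if "f \<in> fock_inf \<alpha>" for f
    by (rule toeplitz_fi[OF that C])
  fix fs :: "nat \<Rightarrow> complex \<Rightarrow> complex"
  assume "(\<forall>n. fs n \<in> fock_inf \<alpha>) \<and> bdd_above (range (\<lambda>n. fock_inf_norm \<alpha> (fs n)))"
  then have fs: "\<And>n. fs n \<in> fock_inf \<alpha>" and bd: "bdd_above (range (\<lambda>n. fock_inf_norm \<alpha> (fs n)))" by auto
  obtain M where M: "\<And>n. fock_inf_norm \<alpha> (fs n) \<le> M" using bd by (auto simp: bdd_above_def)
  have M0: "M \<ge> 0" using M[of 0] norm_nonneg_gen[OF fi_bdd[OF fs[of 0]]] by linarith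
  have fsb: "cmod (fs n w) \<le> M * exp (\<alpha> * (cmod w)\<^sup>2 / 2)" for n w
    using order_trans[OF fi_growth[OF fs[of n], of w] mult_right_mono[OF M[of n]]] by simp
  define H where "H = {h. h holomorphic_on UNIV \<and> (\<forall>w. cmod (h w) \<le> M * exp (\<alpha> * (cmod w)\<^sup>2 / 2))}"
  have hH: "\<And>h. h \<in> H \<Longrightarrow> h holomorphic_on UNIV" by (simp add: H_def)
  have hB: "\<exists>B. \<forall>h\<in>H. \<forall>z\<in>K. norm (h z) \<le> B" if K: "compact K" "K \<subseteq> UNIV" for K
  proof -
    obtain R where R: "\<And>z. z \<in> K \<Longrightarrow> cmod z \<le> R" using compact_imp_bounded[OF K(1)] by (auto simp: bounded_iff)
    show ?thesis
    proof (intro exI ballI)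
      fix h z assume "h \<in> H" "z \<in> K"
      then have "cmod (h z) \<le> M * exp (\<alpha> * (cmod z)\<^sup>2 / 2)" by (simp add: H_def)
      also have "\<dots> \<le> M * exp (\<alpha> * R\<^sup>2 / 2)"
        using R[OF \<open>z \<in> K\<close>] apos M0
        by (intro mult_left_mono) (auto intro!: mult_left_mono power_mono divide_right_mono)
      finally show "norm (h z) \<le> M * exp (\<alpha> * R\<^sup>2 / 2)" by simp
    qed
  qed
  have hR: "range fs \<subseteq> H" using fs fsb by (auto simp: H_def fi_holo)
  obtain h0 r where h0: "h0 holomorphic_on UNIV" and r: "strict_mono r"
    and pt: "\<And>x. x \<in> UNIV \<Longrightarrow> ((\<lambda>n. fs (r n) x) \<longlongrightarrow> h0 x) sequentially"
    and un: "\<And>K. \<lbrakk>compact K; K \<subseteq> UNIV\<rbrakk> \<Longrightarrow> uniform_limit K (fs \<circ> r) h0 sequentially"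
    by (rule Montel[OF open_UNIV hH hB hR]) auto
  have h0b: "cmod (h0 w) \<le> M * exp (\<alpha> * (cmod w)\<^sup>2 / 2)" for w
    by (rule tendsto_le[OF trivial_limit_sequentially tendsto_const tendsto_norm[OF pt]]) (auto simp: fsb)
  have h0m: "h0 \<in> borel_measurable borel" by (rule holo_meas[OF h0])
  have fsm: "\<And>n. fs n \<in> borel_measurable borel" by (rule holo_meas[OF fi_holo[OF fs]])
  have h0fi: "h0 \<in> fock_inf \<alpha>" by (rule growth_fi[OF h0 h0b])
  define g where "g = toeplitz \<alpha> \<mu> h0"
  have gfi: "g \<in> fock_inf \<alpha>" unfolding g_def by (rule toeplitz_fi[OF h0fi C])
  define fr where "fr k = fs (r k)" for k
  have frb: "cmod (fr k w - h0 w) \<le> (2 * M) * exp (\<alpha> * (cmod w)\<^sup>2 / 2)" for k w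
  proof -
    have "cmod (fr k w - h0 w) \<le> cmod (fr k w) + cmod (h0 w)" by (rule norm_triangle_ineq4)
    also have "\<dots> \<le> (2 * M) * exp (\<alpha> * (cmod w)\<^sup>2 / 2)" using fsb[of "r k" w] h0b[of w] unfolding fr_def by simp
    finally show ?thesis .
  qed
  have frm: "\<And>k. fr k \<in> borel_measurable borel" unfolding fr_def by (rule fsm)
  have frun: "\<And>K. compact K \<Longrightarrow> uniform_limit K fr h0 sequentially"
    using un unfolding fr_def comp_def by auto
  have diffeq: "toeplitz \<alpha> \<mu> (fr k) z - g z = toeplitz \<alpha> \<mu> (\<lambda>w. fr k w - h0 w) z" for k z
  proof -
    have "toeplitz \<alpha> \<mu> (fr k) z - g z = integral\<^sup>L \<mu> (\<lambda>w. tz (fr k) z w - tz h0 z w)"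
    proof -
      have frb1: "\<And>w. cmod (fr k w) \<le> M * exp (\<alpha> * (cmod w)\<^sup>2 / 2)" unfolding fr_def by (rule fsb)
      show ?thesis unfolding g_def toeplitz_tz
        by (rule Bochner_Integration.integral_diff[symmetric, OF tz_int[OF frm frb1] tz_int[OF h0m h0b]])
    qed
    also have "(\<lambda>w. tz (fr k) z w - tz h0 z w) = tz (\<lambda>w. fr k w - h0 w) z"
      unfolding tz_def by (simp add: fun_eq_iff algebra_simps)
    finally show ?thesis unfolding toeplitz_tz .
  qed
  have dm: "(\<lambda>w. fr k w - h0 w) \<in> borel_measurable borel" for k using frm h0m by measurable
  show "\<exists>r g. strict_mono r \<and> g \<in> fock_inf \<alpha> \<and> (\<lambda>k. fock_inf_norm \<alpha> (\<lambda>z. toeplitz \<alpha> \<mu> (fs (r k)) z - g z)) \<longlonglongrightarrow> 0"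
  proof (intro exI conjI)
    show "strict_mono r" by (rule r)
    show "g \<in> fock_inf \<alpha>" by (rule gfi)
    show "(\<lambda>k. fock_inf_norm \<alpha> (\<lambda>z. toeplitz \<alpha> \<mu> (fs (r k)) z - g z)) \<longlonglongrightarrow> 0"
    proof (rule LIMSEQ_I)
      fix \<epsilon> :: real assume e: "\<epsilon> > 0"
      obtain N where N: "\<And>k z. k \<ge> N \<Longrightarrow> integral\<^sup>L \<mu> (\<lambda>w. phi (\<lambda>w. fr k w - h0 w) w * gk z w) \<le> \<epsilon> / 2"
        using key_estimate[OF M0 frm h0m frb frun, of "\<epsilon> / 2"] e by auto
      show "\<exists>N. \<forall>k\<ge>N. norm (fock_inf_norm \<alpha> (\<lambda>z. toeplitz \<alpha> \<mu> (fs (r k)) z - g z) - 0) < \<epsilon>"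
      proof (intro exI allI impI)
        fix k assume k: "k \<ge> N"
        have eq: "(\<lambda>z. toeplitz \<alpha> \<mu> (fs (r k)) z - g z) = toeplitz \<alpha> \<mu> (\<lambda>w. fr k w - h0 w)"
          using diffeq unfolding fr_def by auto
        have pw: "cmod (toeplitz \<alpha> \<mu> (\<lambda>w. fr k w - h0 w) z) * exp (- \<alpha> * (cmod z)\<^sup>2 / 2) \<le> \<epsilon> / 2" for z
          using order_trans[OF toep_le[OF dm frb] N[OF k]] .
        have "fock_inf_norm \<alpha> (toeplitz \<alpha> \<mu> (\<lambda>w. fr k w - h0 w)) \<le> \<epsilon> / 2" by (rule norm_least[OF pw])
        moreover have "fock_inf_norm \<alpha> (toeplitz \<alpha> \<mu> (\<lambda>w. fr k w - h0 w)) \<ge> 0"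
          by (rule norm_nonneg_gen, rule bdd_aboveI2[where M="\<epsilon> / 2"]) (use pw in blast)
        ultimately show "norm (fock_inf_norm \<alpha> (\<lambda>z. toeplitz \<alpha> \<mu> (fs (r k)) z - g z) - 0) < \<epsilon>"
          unfolding eq using e by simp
      qed
    qed
  qed
qed

end

context fock begin

definition ka :: "complex \<Rightarrow> complex \<Rightarrow> complex" where
  "ka a w = exp (complex_of_real \<alpha> * cnj a * w - complex_of_real (\<alpha> * (cmod a)\<^sup>2 / 2))"

definition Bk :: "complex \<Rightarrow> complex \<Rightarrow> real" where
  "Bk a w = exp (- \<alpha> * (cmod (a - w))\<^sup>2)"

definition BB :: "complex \<Rightarrow> ennreal" where
  "BB a = (\<integral>\<^sup>+ w. ennreal (Bk a w) \<partial>\<mu>)"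

lemma Re_id: "Re (cnj a * w) = ((cmod w)\<^sup>2 + (cmod a)\<^sup>2 - (cmod (a - w))\<^sup>2) / 2"
proof -
  have "(cmod (a - w))\<^sup>2 = (cmod w)\<^sup>2 - 2 * Re (cnj a * w) + (cmod a)\<^sup>2"
    by (simp only: cmod_power2) (simp add: power2_eq_square algebra_simps)
  then show ?thesis by simp
qed

lemma ka_norm: "cmod (ka a w) * exp (- \<alpha> * (cmod w)\<^sup>2 / 2) = gk a w"
proof -
  have "cmod (ka a w) = exp (\<alpha> * Re (cnj a * w) - \<alpha> * (cmod a)\<^sup>2 / 2)"
    unfolding ka_def by (simp add: norm_exp_eq_Re algebra_simps)
  moreover have "\<alpha> * Re (cnj a * w) - \<alpha> * (cmod a)\<^sup>2 / 2 + (- \<alpha> * (cmod w)\<^sup>2 / 2) = - \<alpha> * (cmod (a - w))\<^sup>2 / 2"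
    unfolding Re_id by (simp add: field_simps)
  ultimately show ?thesis unfolding gk_def by (simp add: mult_exp_exp)
qed

lemma ka_holo: "ka a holomorphic_on UNIV"
  unfolding ka_def by (intro holomorphic_intros)

lemma ka_bound: "cmod (ka a w) \<le> 1 * exp (\<alpha> * (cmod w)\<^sup>2 / 2)"
proof -
  have "cmod (ka a w) * exp (- \<alpha> * (cmod w)\<^sup>2 / 2) \<le> 1" using ka_norm gk_le1 by simp
  then show ?thesis by (simp add: exp_minus field_simps)
qed

lemma ka_fi: "ka a \<in> fock_inf \<alpha>" by (rule growth_fi[OF ka_holo ka_bound])

lemma ka_normle: "fock_inf_norm \<alpha> (ka a) \<le> 1"
  by (rule norm_least) (metis ka_norm gk_le1)

lemma Bk_meas[measurable]: "Bk a \<in> borel_measurable borel" unfolding Bk_def by measurable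

lemma BB_fin: "BB a < \<infinity>"
proof -
  have eq: "(cmod (fock_kernel \<alpha> a w))\<^sup>2 * exp (- \<alpha> * (cmod w)\<^sup>2) = Bk a w * exp (\<alpha> * (cmod a)\<^sup>2)" for w
  proof -
    have "(cmod (fock_kernel \<alpha> a w))\<^sup>2 = exp (2 * \<alpha> * Re (cnj a * w))"
      unfolding kern_norm by (simp add: power2_eq_square mult_exp_exp)
    moreover have "2 * \<alpha> * Re (cnj a * w) + (- \<alpha> * (cmod w)\<^sup>2) = - \<alpha> * (cmod (a - w))\<^sup>2 + \<alpha> * (cmod a)\<^sup>2"
      unfolding Re_id by (simp add: field_simps)
    ultimately show ?thesis unfolding Bk_def by (simp add: mult_exp_exp)
  qed
  have "(\<integral>\<^sup>+ w. ennreal ((cmod (fock_kernel \<alpha> a w))\<^sup>2 * exp (- \<alpha> * (cmod w)\<^sup>2)) \<partial>\<mu>) < \<infinity>"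
    using condM unfolding condition_M_def by blast
  also have "(\<integral>\<^sup>+ w. ennreal ((cmod (fock_kernel \<alpha> a w))\<^sup>2 * exp (- \<alpha> * (cmod w)\<^sup>2)) \<partial>\<mu>)
      = (\<integral>\<^sup>+ w. ennreal (Bk a w) * ennreal (exp (\<alpha> * (cmod a)\<^sup>2)) \<partial>\<mu>)"
    unfolding eq by (simp add: ennreal_mult Bk_def)
  also have "\<dots> = BB a * ennreal (exp (\<alpha> * (cmod a)\<^sup>2))"
    unfolding BB_def by (rule nn_integral_multc) (intro meas_mu, measurable)
  finally have "BB a * ennreal (exp (\<alpha> * (cmod a)\<^sup>2)) < \<infinity>" .
  then show ?thesis by (cases "BB a = 0") (auto simp: ennreal_mult_less_top)
qed

lemma Bk_int: "integrable \<mu> (Bk a)"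
proof (rule integrableI_bounded[OF meas_mu[OF Bk_meas]])
  have "(\<integral>\<^sup>+ x. ennreal (norm (Bk a x)) \<partial>\<mu>) = BB a" unfolding BB_def
    by (rule nn_integral_cong) (simp add: Bk_def)
  then show "(\<integral>\<^sup>+ x. ennreal (norm (Bk a x)) \<partial>\<mu>) < \<infinity>" using BB_fin by simp
qed

definition Br :: "complex \<Rightarrow> real" where "Br a = integral\<^sup>L \<mu> (Bk a)"

lemma BB_Br: "BB a = ennreal (Br a)"
  unfolding BB_def Br_def by (rule nn_integral_eq_integral[OF Bk_int]) (simp add: Bk_def)

lemma Br_nonneg: "Br a \<ge> 0" unfolding Br_def by (rule integral_nonneg_AE) (simp add: Bk_def)

lemma tz_ka: "tz (ka a) a w = complex_of_real (Bk a w * exp (\<alpha> * (cmod a)\<^sup>2 / 2))"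
proof -
  have e: "complex_of_real \<alpha> * cnj a * w - complex_of_real (\<alpha> * (cmod a)\<^sup>2 / 2) + complex_of_real \<alpha> * a * cnj w
      + complex_of_real (- \<alpha> * (cmod w)\<^sup>2) = complex_of_real (- \<alpha> * (cmod (a - w))\<^sup>2 + \<alpha> * (cmod a)\<^sup>2 / 2)"
  proof -
    have "cnj a * w + a * cnj w = complex_of_real (2 * Re (cnj a * w))"
      by (simp add: complex_eq_iff algebra_simps)
    then have "complex_of_real \<alpha> * cnj a * w + complex_of_real \<alpha> * a * cnj w = complex_of_real (2 * \<alpha> * Re (cnj a * w))"
      by (metis (no_types, lifting) distrib_left mult.assoc of_real_mult mult.left_commute)
    moreover have "2 * \<alpha> * Re (cnj a * w) - \<alpha> * (cmod a)\<^sup>2 / 2 + (- \<alpha> * (cmod w)\<^sup>2) = - \<alpha> * (cmod (a - w))\<^sup>2 + \<alpha> * (cmod a)\<^sup>2 / 2"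
      unfolding Re_id by (simp add: field_simps)
    ultimately show ?thesis by (metis (no_types, lifting) add.commute add_diff_eq of_real_add of_real_diff diff_add_eq)
  qed
  define A where "A = complex_of_real \<alpha> * cnj a * w - complex_of_real (\<alpha> * (cmod a)\<^sup>2 / 2)"
  have c: "cnj (fock_kernel \<alpha> a w) = exp (complex_of_real \<alpha> * a * cnj w)"
    unfolding fock_kernel_def exp_cnj by simp
  have "tz (ka a) a w = exp A * exp (complex_of_real \<alpha> * a * cnj w) * exp (complex_of_real (- \<alpha> * (cmod w)\<^sup>2))"
    unfolding tz_def c unfolding ka_def A_def exp_of_real ..
  also have "\<dots> = exp (A + complex_of_real \<alpha> * a * cnj w + complex_of_real (- \<alpha> * (cmod w)\<^sup>2))"
    by (simp only: mult_exp_exp)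
  also have "\<dots> = exp (complex_of_real (- \<alpha> * (cmod (a - w))\<^sup>2 + \<alpha> * (cmod a)\<^sup>2 / 2))"
    unfolding A_def e ..
  also have "\<dots> = complex_of_real (Bk a w * exp (\<alpha> * (cmod a)\<^sup>2 / 2))"
    unfolding exp_of_real Bk_def by (simp add: mult_exp_exp)
  finally show ?thesis .
qed

lemma T_ka: "cmod (toeplitz \<alpha> \<mu> (ka a) a) * exp (- \<alpha> * (cmod a)\<^sup>2 / 2) = Br a"
proof -
  have "toeplitz \<alpha> \<mu> (ka a) a = complex_of_real (Br a * exp (\<alpha> * (cmod a)\<^sup>2 / 2))"
  proof -
    have "tz (ka a) a = (\<lambda>w. complex_of_real (Bk a w * exp (\<alpha> * (cmod a)\<^sup>2 / 2)))"
      by (rule ext) (rule tz_ka)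
    then show ?thesis unfolding toeplitz_tz Br_def by (simp add: integral_mult_left_zero)
  qed
  then have "cmod (toeplitz \<alpha> \<mu> (ka a) a) = Br a * exp (\<alpha> * (cmod a)\<^sup>2 / 2)"
    using Br_nonneg[of a] by (simp only: norm_of_real) (simp add: abs_of_nonneg)
  then show ?thesis by (simp add: exp_minus)
qed

lemma diff_bdd:
  assumes "F \<in> fock_inf \<alpha>" "H \<in> fock_inf \<alpha>"
  shows "bdd_above (range (\<lambda>z. cmod (F z - H z) * exp (- \<alpha> * (cmod z)\<^sup>2 / 2)))"
proof (rule bdd_aboveI2)
  fix z
  have "cmod (F z - H z) * exp (- \<alpha> * (cmod z)\<^sup>2 / 2) \<le> (cmod (F z) + cmod (H z)) * exp (- \<alpha> * (cmod z)\<^sup>2 / 2)"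
    by (intro mult_right_mono norm_triangle_ineq4) auto
  also have "\<dots> \<le> fock_inf_norm \<alpha> F + fock_inf_norm \<alpha> H"
    using norm_upper[OF assms(1), of z] norm_upper[OF assms(2), of z] by (simp add: distrib_right)
  finally show "cmod (F z - H z) * exp (- \<alpha> * (cmod z)\<^sup>2 / 2) \<le> fock_inf_norm \<alpha> F + fock_inf_norm \<alpha> H" .
qed

lemma norm_tri:
  assumes "F \<in> fock_inf \<alpha>" "H \<in> fock_inf \<alpha>"
  shows "fock_inf_norm \<alpha> F \<le> fock_inf_norm \<alpha> (\<lambda>z. F z - H z) + fock_inf_norm \<alpha> H"
proof (rule norm_least)
  fix z
  have "cmod (F z) * exp (- \<alpha> * (cmod z)\<^sup>2 / 2) \<le> (cmod (F z - H z) + cmod (H z)) * exp (- \<alpha> * (cmod z)\<^sup>2 / 2)"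
    using norm_triangle_ineq2[of "F z" "H z"] by (intro mult_right_mono) auto
  also have "\<dots> \<le> fock_inf_norm \<alpha> (\<lambda>z. F z - H z) + fock_inf_norm \<alpha> H"
    using norm_upper_gen[OF diff_bdd[OF assms], of z] norm_upper[OF assms(2), of z] by (simp add: distrib_right)
  finally show "cmod (F z) * exp (- \<alpha> * (cmod z)\<^sup>2 / 2) \<le> fock_inf_norm \<alpha> (\<lambda>z. F z - H z) + fock_inf_norm \<alpha> H" .
qed

lemma compact_bounded:
  assumes cmp: "fock_inf_compact \<alpha> T"
  shows "\<exists>C. \<forall>f\<in>fock_inf \<alpha>. fock_inf_norm \<alpha> f \<le> 1 \<longrightarrow> fock_inf_norm \<alpha> (T f) \<le> C"
proof (rule ccontr)
  assume "\<not> ?thesis"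
  then have "\<forall>n::nat. \<exists>f. f \<in> fock_inf \<alpha> \<and> fock_inf_norm \<alpha> f \<le> 1 \<and> fock_inf_norm \<alpha> (T f) > real n"
    by (meson not_le)
  then obtain fs where fs: "\<And>n. fs n \<in> fock_inf \<alpha>" and fs1: "\<And>n. fock_inf_norm \<alpha> (fs n) \<le> 1"
    and fsT: "\<And>n. fock_inf_norm \<alpha> (T (fs n)) > real n" by metis
  have maps: "\<And>f. f \<in> fock_inf \<alpha> \<Longrightarrow> T f \<in> fock_inf \<alpha>" using cmp unfolding fock_inf_compact_def by blast
  have "(\<forall>n. fs n \<in> fock_inf \<alpha>) \<and> bdd_above (range (\<lambda>n. fock_inf_norm \<alpha> (fs n)))"
    using fs fs1 by (auto intro!: bdd_aboveI2)
  then obtain r g where r: "strict_mono r" and g: "g \<in> fock_inf \<alpha>"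
    and lim: "(\<lambda>k. fock_inf_norm \<alpha> (\<lambda>z. T (fs (r k)) z - g z)) \<longlonglongrightarrow> 0"
    using cmp unfolding fock_inf_compact_def by blast
  obtain N where N: "\<And>k. k \<ge> N \<Longrightarrow> norm (fock_inf_norm \<alpha> (\<lambda>z. T (fs (r k)) z - g z) - 0) < 1"
    using LIMSEQ_D[OF lim, of 1] by auto
  define k where "k = max N (nat \<lceil>fock_inf_norm \<alpha> g\<rceil> + 1)"
  have "fock_inf_norm \<alpha> (T (fs (r k))) \<le> fock_inf_norm \<alpha> (\<lambda>z. T (fs (r k)) z - g z) + fock_inf_norm \<alpha> g"
    by (rule norm_tri[OF maps[OF fs] g])
  also have "\<dots> < 1 + fock_inf_norm \<alpha> g" using N[of k] unfolding k_def by auto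
  also have "\<dots> \<le> real k" unfolding k_def by linarith
  also have "\<dots> \<le> real (r k)" using seq_suble[OF r, of k] by simp
  finally show False using fsT[of "r k"] by simp
qed

lemma gk_small:
  assumes d: "\<delta> > 0"
  shows "\<exists>R. \<forall>a w. R \<le> cmod (a - w) \<longrightarrow> gk a w \<le> \<delta>"
proof (intro exI allI impI)
  fix a w assume R: "1 + 2 / (\<alpha> * \<delta>) \<le> cmod (a - w)"
  define t where "t = cmod (a - w)"
  have t1: "t \<ge> 1" using R d apos unfolding t_def by (smt (verit) divide_pos_pos mult_pos_pos)
  have "t\<^sup>2 \<ge> t" using t1 by (simp add: power2_eq_square)
  then have x: "\<alpha> * t\<^sup>2 / 2 \<ge> \<alpha> * t / 2" using apos by (simp add: mult_left_mono divide_right_mono)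
  have "\<alpha> * t / 2 \<ge> \<alpha> * (2 / (\<alpha> * \<delta>)) / 2" using R apos unfolding t_def
    by (intro divide_right_mono mult_left_mono) auto
  also have "\<alpha> * (2 / (\<alpha> * \<delta>)) / 2 = 1 / \<delta>" using apos d by (simp add: field_simps)
  finally have "\<alpha> * t\<^sup>2 / 2 \<ge> 1 / \<delta>" using x by linarith
  then have "exp (\<alpha> * t\<^sup>2 / 2) \<ge> 1 / \<delta>" using exp_ge_add_one_self[of "\<alpha> * t\<^sup>2 / 2"] by linarith
  then have "inverse (exp (\<alpha> * t\<^sup>2 / 2)) \<le> \<delta>" using d
    by (metis inverse_eq_divide inverse_inverse_eq le_imp_inverse_le zero_less_divide_1_iff)
  then show "gk a w \<le> \<delta>" unfolding gk_def t_def by (simp add: exp_minus)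
qed

end

context fock_fin begin

lemma T_ka_pt:
  assumes as: "\<And>k. real k \<le> cmod (as k)"
  shows "(\<lambda>k. toeplitz \<alpha> \<mu> (ka (as k)) z) \<longlonglongrightarrow> 0"
proof -
  define E where "E = exp (\<alpha> * (cmod z)\<^sup>2 / 2)"
  have nt: "norm (tz (ka a) z w) = gk a w * gk z w * E" for a w
    unfolding norm_tz ka_norm E_def ..
  have "(\<lambda>k. integral\<^sup>L \<mu> (tz (ka (as k)) z)) \<longlonglongrightarrow> integral\<^sup>L \<mu> (\<lambda>w. 0::complex)"
  proof (rule integral_dominated_convergence[where w="\<lambda>w. gk z w * E"])
    show "(\<lambda>w. 0::complex) \<in> borel_measurable \<mu>" by simp
    show "tz (ka (as k)) z \<in> borel_measurable \<mu>" for k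
      by (intro meas_mu tz_meas holo_meas ka_holo)
    show "integrable \<mu> (\<lambda>w. gk z w * E)" by (intro integrable_mult_left gk_int)
    show "AE w in \<mu>. (\<lambda>k. tz (ka (as k)) z w) \<longlonglongrightarrow> 0"
    proof (rule AE_I2)
      fix w
      have g0: "(\<lambda>k. gk (as k) w) \<longlonglongrightarrow> 0"
      proof (rule LIMSEQ_I)
        fix r :: real assume r: "r > 0"
        obtain R where R: "\<And>a w. R \<le> cmod (a - w) \<Longrightarrow> gk a w \<le> r / 2"
          using gk_small[of "r / 2"] r by auto
        show "\<exists>N. \<forall>k\<ge>N. norm (gk (as k) w - 0) < r"
        proof (intro exI allI impI)
          fix k assume k: "k \<ge> nat \<lceil>R + cmod w\<rceil>"
          then have "real k \<ge> R + cmod w" by linarith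
          then have "R \<le> cmod (as k) - cmod w" using as[of k] by linarith
          also have "\<dots> \<le> cmod (as k - w)" by (rule norm_triangle_ineq2)
          finally have "gk (as k) w \<le> r / 2" by (rule R)
          then show "norm (gk (as k) w - 0) < r" using gk_pos[of "as k" w] r by simp
        qed
      qed
      have "(\<lambda>k. gk (as k) w * (gk z w * E)) \<longlonglongrightarrow> 0"
        by (rule tendsto_mult_left_zero[OF g0])
      then have "(\<lambda>k. norm (tz (ka (as k)) z w)) \<longlonglongrightarrow> 0" unfolding nt by (simp add: mult.assoc)
      then show "(\<lambda>k. tz (ka (as k)) z w) \<longlonglongrightarrow> 0" by (rule tendsto_norm_zero_cancel)
    qed
    show "AE w in \<mu>. norm (tz (ka (as k)) z w) \<le> gk z w * E" for k
    proof (rule AE_I2)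
      fix w
      have "gk (as k) w * (gk z w * E) \<le> 1 * (gk z w * E)"
        using gk_le1[of "as k" w] gk_pos[of z w] unfolding E_def
        by (intro mult_right_mono) auto
      then show "norm (tz (ka (as k)) z w) \<le> gk z w * E" unfolding nt by (simp add: mult.assoc)
    qed
  qed
  then show ?thesis unfolding toeplitz_tz by simp
qed

lemma Br_lim:
  assumes cmp: "fock_inf_compact \<alpha> (toeplitz \<alpha> \<mu>)"
  shows "(Br \<longlongrightarrow> 0) at_infinity"
proof (rule ccontr)
  assume "\<not> (Br \<longlongrightarrow> 0) at_infinity"
  then obtain \<epsilon> where e: "\<epsilon> > 0" and ne: "\<not> eventually (\<lambda>z. dist (Br z) 0 < \<epsilon>) at_infinity"
    unfolding tendsto_iff by auto
  have "\<forall>n::nat. \<exists>z. real n \<le> cmod z \<and> Br z \<ge> \<epsilon>"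
  proof
    fix n :: nat
    from ne have "\<not> (\<forall>x. real n \<le> norm x \<longrightarrow> dist (Br x) 0 < \<epsilon>)" unfolding eventually_at_infinity by blast
    then show "\<exists>z. real n \<le> cmod z \<and> Br z \<ge> \<epsilon>" using Br_nonneg by (auto simp: dist_real_def)
  qed
  then obtain as where as: "\<And>n. real n \<le> cmod (as n)" and asB: "\<And>n. Br (as n) \<ge> \<epsilon>" by metis
  have maps: "\<And>f. f \<in> fock_inf \<alpha> \<Longrightarrow> toeplitz \<alpha> \<mu> f \<in> fock_inf \<alpha>" using cmp unfolding fock_inf_compact_def by blast
  have bd: "(\<forall>n. ka (as n) \<in> fock_inf \<alpha>) \<and> bdd_above (range (\<lambda>n. fock_inf_norm \<alpha> (ka (as n))))"
    using ka_fi ka_normle by (auto intro!: bdd_aboveI2)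
  have cmp2: "\<And>fs. (\<forall>n. fs n \<in> fock_inf \<alpha>) \<and> bdd_above (range (\<lambda>n. fock_inf_norm \<alpha> (fs n))) \<Longrightarrow>
      \<exists>(r::nat \<Rightarrow> nat) g. strict_mono r \<and> g \<in> fock_inf \<alpha> \<and> (\<lambda>k. fock_inf_norm \<alpha> (\<lambda>z. toeplitz \<alpha> \<mu> (fs (r k)) z - g z)) \<longlonglongrightarrow> 0"
  proof -
    fix fs :: "nat \<Rightarrow> complex \<Rightarrow> complex"
    assume h: "(\<forall>n. fs n \<in> fock_inf \<alpha>) \<and> bdd_above (range (\<lambda>n. fock_inf_norm \<alpha> (fs n)))"
    have A: "\<forall>fs. (\<forall>n. fs n \<in> fock_inf \<alpha>) \<and> bdd_above (range (\<lambda>n. fock_inf_norm \<alpha> (fs n))) \<longrightarrow>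
      (\<exists>(r::nat \<Rightarrow> nat) g. strict_mono r \<and> g \<in> fock_inf \<alpha> \<and> (\<lambda>k. fock_inf_norm \<alpha> (\<lambda>z. toeplitz \<alpha> \<mu> (fs (r k)) z - g z)) \<longlonglongrightarrow> 0)"
      using cmp unfolding fock_inf_compact_def by (rule conjunct2)
    show "\<exists>(r::nat \<Rightarrow> nat) g. strict_mono r \<and> g \<in> fock_inf \<alpha> \<and> (\<lambda>k. fock_inf_norm \<alpha> (\<lambda>z. toeplitz \<alpha> \<mu> (fs (r k)) z - g z)) \<longlonglongrightarrow> 0"
      by (rule mp[OF spec[OF A, of fs] h])
  qed
  obtain r g where r: "strict_mono r" and g: "g \<in> fock_inf \<alpha>"
    and lim: "(\<lambda>k. fock_inf_norm \<alpha> (\<lambda>z. toeplitz \<alpha> \<mu> (ka (as (r k))) z - g z)) \<longlonglongrightarrow> 0"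
    using cmp2[of "\<lambda>n. ka (as n)", OF bd] by blast
  define F where "F k = toeplitz \<alpha> \<mu> (ka (as (r k)))" for k
  have Ffi: "F k \<in> fock_inf \<alpha>" for k unfolding F_def by (rule maps[OF ka_fi])
  have g0: "g z = 0" for z
  proof -
    have as': "real k \<le> cmod (as (r k))" for k using as[of "r k"] seq_suble[OF r, of k] by linarith
    have t0: "(\<lambda>k. F k z) \<longlonglongrightarrow> 0" unfolding F_def by (rule T_ka_pt[OF as'])
    have le: "cmod (F k z - g z) \<le> fock_inf_norm \<alpha> (\<lambda>z. F k z - g z) * exp (\<alpha> * (cmod z)\<^sup>2 / 2)" for k
      using norm_upper_gen[OF diff_bdd[OF Ffi[of k] g], of z] by (simp add: exp_minus field_simps)
    have "(\<lambda>k. fock_inf_norm \<alpha> (\<lambda>z. F k z - g z) * exp (\<alpha> * (cmod z)\<^sup>2 / 2)) \<longlonglongrightarrow> 0 * exp (\<alpha> * (cmod z)\<^sup>2 / 2)"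
      using lim unfolding F_def by (intro tendsto_mult tendsto_const)
    then have b0: "(\<lambda>k. fock_inf_norm \<alpha> (\<lambda>z. F k z - g z) * exp (\<alpha> * (cmod z)\<^sup>2 / 2)) \<longlonglongrightarrow> 0" by simp
    have "(\<lambda>k. F k z - g z) \<longlonglongrightarrow> 0"
      by (rule Lim_null_comparison[OF always_eventually b0]) (rule allI, rule le)
    then have "(\<lambda>k. F k z) \<longlonglongrightarrow> g z" by (simp add: LIM_zero_iff)
    then show "g z = 0" using t0 LIMSEQ_unique by blast
  qed
  have F0: "(\<lambda>k. fock_inf_norm \<alpha> (F k)) \<longlonglongrightarrow> 0" using lim g0 unfolding F_def by simp
  have le2: "norm (Br (as (r k))) \<le> fock_inf_norm \<alpha> (F k)" for k
    using norm_upper[OF Ffi[of k], of "as (r k)"] T_ka[of "as (r k)"] Br_nonneg[of "as (r k)"] unfolding F_def by simp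
  have "(\<lambda>k. Br (as (r k))) \<longlonglongrightarrow> 0"
    by (rule Lim_null_comparison[OF always_eventually F0]) (rule allI, rule le2)
  then obtain N where NN: "\<And>k. k \<ge> N \<Longrightarrow> norm (Br (as (r k)) - 0) < \<epsilon>" using LIMSEQ_D e by metis
  have "\<bar>Br (as (r N))\<bar> < \<epsilon>" using NN[of N] by simp
  then show False using asB[of "r N"] by linarith
qed

end

context fock begin

definition lat :: "int \<times> int \<Rightarrow> complex" where "lat p = Complex (of_int (fst p)) (of_int (snd p))"
definition aa :: "int \<Rightarrow> real" where "aa m = exp (- \<alpha> * (of_int m)\<^sup>2 / 8)"
definition cc :: "int \<times> int \<Rightarrow> real" where "cc p = exp (\<alpha> / 2) * aa (fst p) * aa (snd p)"

lemma cc_pos: "cc p > 0" unfolding cc_def aa_def by simp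

lemma round_sq: "(of_int (round t) :: real)\<^sup>2 / 4 \<le> t\<^sup>2"
proof -
  define m where "m = round t"
  have d: "\<bar>of_int m - t\<bar> \<le> 1 / 2" unfolding m_def by (rule of_int_round_abs_le)
  show ?thesis
  proof (cases "m = 0")
    case True then show ?thesis by (simp add: m_def)
  next
    case False
    then have "\<bar>real_of_int m\<bar> \<ge> 1" by linarith
    then have "\<bar>real_of_int m / 2\<bar> \<le> \<bar>t\<bar>" using d by linarith
    then have "\<bar>real_of_int m / 2\<bar>\<^sup>2 \<le> \<bar>t\<bar>\<^sup>2" by (rule power_mono) auto
    then have "(real_of_int m / 2)\<^sup>2 \<le> t\<^sup>2" by (simp only: power2_abs)
    then show ?thesis by (simp add: m_def power_divide)
  qed
qed

lemma round_d: "(t - of_int (round t) :: real)\<^sup>2 \<le> 1 / 4"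
proof -
  have d: "\<bar>t - of_int (round t)\<bar> \<le> 1 / 2" using of_int_round_abs_le[of t] by linarith
  then have "\<bar>t - of_int (round t)\<bar>\<^sup>2 \<le> (1/2)\<^sup>2" by (intro power_mono) auto
  then show ?thesis by (simp add: power2_eq_square)
qed

lemma lat_point:
  "exp (- \<alpha> * (cmod x)\<^sup>2 / 2) \<le> cc (round (Re x), round (Im x)) * exp (- \<alpha> * (cmod (x - lat (round (Re x), round (Im x))))\<^sup>2)"
proof -
  define m where "m = round (Re x)"
  define n where "n = round (Im x)"
  define D where "D = (cmod (x - lat (m, n)))\<^sup>2"
  have D: "D \<le> 1 / 2"
    using round_d[of "Re x"] round_d[of "Im x"] unfolding D_def lat_def m_def n_def cmod_power2 by simp
  have X: "(cmod x)\<^sup>2 \<ge> (of_int m)\<^sup>2 / 4 + (of_int n)\<^sup>2 / 4"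
    using round_sq[of "Re x"] round_sq[of "Im x"] unfolding m_def n_def cmod_power2 by simp
  have "0 \<le> \<alpha> * ((cmod x)\<^sup>2 / 2 - (of_int m)\<^sup>2 / 8 - (of_int n)\<^sup>2 / 8 + 1 / 2 - D)"
    using apos X D by (intro mult_nonneg_nonneg) auto
  then have "- \<alpha> * (cmod x)\<^sup>2 / 2 \<le> \<alpha> / 2 + (- \<alpha> * (of_int m)\<^sup>2 / 8) + (- \<alpha> * (of_int n)\<^sup>2 / 8) + (- \<alpha> * D)"
    by (simp add: algebra_simps)
  then have "exp (- \<alpha> * (cmod x)\<^sup>2 / 2) \<le> exp (\<alpha> / 2 + (- \<alpha> * (of_int m)\<^sup>2 / 8) + (- \<alpha> * (of_int n)\<^sup>2 / 8) + (- \<alpha> * D))"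
    by simp
  also have "\<dots> = cc (m, n) * exp (- \<alpha> * D)"
    unfolding cc_def aa_def fst_conv snd_conv exp_add ..
  finally show ?thesis unfolding D_def m_def n_def .
qed

lemma single_le_count:
  fixes f :: "'b \<Rightarrow> ennreal"
  shows "f y \<le> (\<integral>\<^sup>+ x. f x \<partial>count_space UNIV)"
proof -
  have "f y = (\<integral>\<^sup>+ x. f x * indicator {y} x \<partial>count_space UNIV)"
    using nn_integral_indicator_singleton[of y "count_space UNIV" f] by simp
  also have "\<dots> \<le> (\<integral>\<^sup>+ x. f x \<partial>count_space UNIV)"
    by (intro nn_integral_mono) (auto simp: indicator_def)
  finally show ?thesis .
qed

lemma G_le_lat: "G z \<le> (\<integral>\<^sup>+ p. ennreal (cc p) * BB (z + lat p) \<partial>count_space UNIV)"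
proof -
  have "G z \<le> (\<integral>\<^sup>+ w. (\<integral>\<^sup>+ p. ennreal (cc p * Bk (z + lat p) w) \<partial>count_space UNIV) \<partial>\<mu>)"
    unfolding G_def
  proof (intro nn_integral_mono)
    fix w
    have "gk z w = exp (- \<alpha> * (cmod (w - z))\<^sup>2 / 2)" unfolding gk_def by (simp add: norm_minus_commute)
    also have "\<dots> \<le> cc (round (Re (w - z)), round (Im (w - z))) * Bk (z + lat (round (Re (w - z)), round (Im (w - z)))) w"
      using lat_point[of "w - z"] unfolding Bk_def by (simp add: algebra_simps norm_minus_commute)
    finally have "ennreal (gk z w) \<le> ennreal (cc (round (Re (w - z)), round (Im (w - z))) * Bk (z + lat (round (Re (w - z)), round (Im (w - z)))) w)"
      by (rule ennreal_leI)
    also have "\<dots> \<le> (\<integral>\<^sup>+ p. ennreal (cc p * Bk (z + lat p) w) \<partial>count_space UNIV)"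
      by (rule single_le_count[where f="\<lambda>p. ennreal (cc p * Bk (z + lat p) w)"])
    finally show "ennreal (gk z w) \<le> (\<integral>\<^sup>+ p. ennreal (cc p * Bk (z + lat p) w) \<partial>count_space UNIV)" .
  qed
  also have "\<dots> = (\<integral>\<^sup>+ p. (\<integral>\<^sup>+ w. ennreal (cc p * Bk (z + lat p) w) \<partial>\<mu>) \<partial>count_space UNIV)"
    by (rule nn_integral_count_space_nn_integral) (auto intro!: meas_mu simp: Bk_def)
  also have "\<dots> = (\<integral>\<^sup>+ p. ennreal (cc p) * BB (z + lat p) \<partial>count_space UNIV)"
  proof (rule nn_integral_cong)
    fix p
    have "(\<integral>\<^sup>+ w. ennreal (cc p * Bk (z + lat p) w) \<partial>\<mu>) = (\<integral>\<^sup>+ w. ennreal (cc p) * ennreal (Bk (z + lat p) w) \<partial>\<mu>)"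
      by (rule nn_integral_cong) (rule ennreal_mult, use cc_pos[of p] in simp, simp add: Bk_def)
    also have "\<dots> = ennreal (cc p) * BB (z + lat p)"
      unfolding BB_def by (rule nn_integral_cmult) (intro meas_mu, measurable)
    finally show "(\<integral>\<^sup>+ w. ennreal (cc p * Bk (z + lat p) w) \<partial>\<mu>) = ennreal (cc p) * BB (z + lat p)" .
  qed
  finally show ?thesis .
qed

lemma int_decode_bound: "real k \<le> 2 * \<bar>real_of_int (int_decode k)\<bar> + 1"
  by (cases "even k") (auto simp: int_decode_def sum_decode_def elim!: evenE oddE)

lemma aa_le: "aa (int_decode k) \<le> exp (\<alpha> / 16) * exp (- \<alpha> / 16) ^ k"
proof -
  define d where "d = real_of_int (int_decode k)"
  have d1: "real k \<le> 2 * \<bar>d\<bar> + 1" unfolding d_def by (rule int_decode_bound)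
  have d2: "\<bar>d\<bar> \<le> d\<^sup>2"
  proof (cases "int_decode k = 0")
    case True then show ?thesis by (simp add: d_def)
  next
    case False
    then have "\<bar>d\<bar> \<ge> 1" unfolding d_def by linarith
    then have "\<bar>d\<bar> * 1 \<le> \<bar>d\<bar> * \<bar>d\<bar>" by (intro mult_left_mono) auto
    then show ?thesis by (simp add: power2_eq_square abs_mult_self_eq)
  qed
  have "\<alpha> * (real k - 1) / 16 \<le> \<alpha> * d\<^sup>2 / 8"
  proof -
    have e1: "real k - 1 \<le> 2 * d\<^sup>2" using d1 d2 by linarith
    have "(real k - 1) / 16 \<le> d\<^sup>2 / 8" using e1 by (simp add: field_simps)
    then have "\<alpha> * ((real k - 1) / 16) \<le> \<alpha> * (d\<^sup>2 / 8)" using apos by (intro mult_left_mono) auto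
    then show ?thesis by simp
  qed
  then have "aa (int_decode k) \<le> exp (- (\<alpha> * (real k - 1) / 16))" unfolding aa_def d_def by simp
  also have "\<dots> = exp (\<alpha> / 16) * exp (real k * (- \<alpha> / 16))"
  proof -
    have "- (\<alpha> * (real k - 1) / 16) = \<alpha> / 16 + real k * (- \<alpha> / 16)" by (simp add: field_simps)
    then show ?thesis by (simp only: exp_add)
  qed
  also have "\<dots> = exp (\<alpha> / 16) * exp (- \<alpha> / 16) ^ k" by (simp only: exp_of_nat_mult)
  finally show ?thesis .
qed

lemma aa_fin: "(\<integral>\<^sup>+ m. ennreal (aa m) \<partial>count_space UNIV) < \<infinity>"
proof -
  define \<rho> where "\<rho> = exp (- \<alpha> / 16)"
  have \<rho>: "0 \<le> \<rho>" "\<rho> < 1" unfolding \<rho>_def using apos by auto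
  have "(\<integral>\<^sup>+ m. ennreal (aa m) \<partial>count_space UNIV) = (\<integral>\<^sup>+ k. ennreal (aa (int_decode k)) \<partial>count_space UNIV)"
    using nn_integral_bij_count_space[OF bij_int_decode, of "\<lambda>m. ennreal (aa m)"] by simp
  also have "\<dots> \<le> (\<integral>\<^sup>+ k. ennreal (exp (\<alpha> / 16) * \<rho> ^ k) \<partial>count_space UNIV)"
    unfolding \<rho>_def by (intro nn_integral_mono ennreal_leI aa_le)
  also have "\<dots> = (\<Sum>k. ennreal (exp (\<alpha> / 16) * \<rho> ^ k))" by (rule nn_integral_count_space_nat)
  also have "\<dots> = ennreal (\<Sum>k. exp (\<alpha> / 16) * \<rho> ^ k)"
    using \<rho> by (intro suminf_ennreal2 summable_mult summable_geometric) auto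
  finally show ?thesis by (simp add: order_le_less_trans)
qed

lemma cc_fin: "(\<integral>\<^sup>+ p. ennreal (cc p) \<partial>count_space UNIV) < \<infinity>"
proof -
  define A where "A = (\<integral>\<^sup>+ m. ennreal (aa m) \<partial>count_space UNIV)"
  have "(\<integral>\<^sup>+ p. ennreal (cc p) \<partial>count_space UNIV) = (\<integral>\<^sup>+ m. \<integral>\<^sup>+ n. ennreal (cc (m, n)) \<partial>count_space UNIV \<partial>count_space UNIV)"
    by (rule nn_integral_fst_count_space[symmetric])
  also have "\<dots> = (\<integral>\<^sup>+ m. ennreal (exp (\<alpha> / 2) * aa m) * A \<partial>count_space UNIV)"
  proof (rule nn_integral_cong)
    fix m
    have "(\<integral>\<^sup>+ n. ennreal (cc (m, n)) \<partial>count_space UNIV) = (\<integral>\<^sup>+ n. ennreal (exp (\<alpha> / 2) * aa m) * ennreal (aa n) \<partial>count_space UNIV)"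
      unfolding cc_def aa_def by (rule nn_integral_cong) (simp add: ennreal_mult)
    also have "\<dots> = ennreal (exp (\<alpha> / 2) * aa m) * A" unfolding A_def by (rule nn_integral_cmult) simp
    finally show "(\<integral>\<^sup>+ n. ennreal (cc (m, n)) \<partial>count_space UNIV) = ennreal (exp (\<alpha> / 2) * aa m) * A" .
  qed
  also have "\<dots> = (\<integral>\<^sup>+ m. ennreal (exp (\<alpha> / 2)) * ennreal (aa m) \<partial>count_space UNIV) * A"
    by (subst nn_integral_multc) (auto simp: ennreal_mult aa_def)
  also have "\<dots> = ennreal (exp (\<alpha> / 2)) * A * A"
    unfolding A_def by (subst nn_integral_cmult) auto
  finally show ?thesis using aa_fin unfolding A_def by (simp add: ennreal_mult_less_top)
qed

lemma G_fin_from: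
  assumes C: "\<And>p. Br p \<le> C"
  shows "G z < \<infinity>"
proof -
  have "G z \<le> (\<integral>\<^sup>+ p. ennreal (cc p) * BB (z + lat p) \<partial>count_space UNIV)" by (rule G_le_lat)
  also have "\<dots> \<le> (\<integral>\<^sup>+ p. ennreal (cc p) * ennreal C \<partial>count_space UNIV)"
    unfolding BB_Br by (intro nn_integral_mono mult_left_mono ennreal_leI C) auto
  also have "\<dots> = (\<integral>\<^sup>+ p. ennreal (cc p) \<partial>count_space UNIV) * ennreal C" by (rule nn_integral_multc) simp
  also have "\<dots> < \<infinity>" using cc_fin by (simp add: ennreal_mult_less_top)
  finally show ?thesis .
qed

end

context fock_fin begin

lemma Gr_cont: "continuous_on UNIV Gr"
proof (rule continuous_on_sequentiallyI)
  fix u :: "nat \<Rightarrow> complex" and a assume u: "u \<longlonglongrightarrow> a"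
  obtain K where K: "K > 0" "\<And>n. norm (u n) \<le> K" using convergent_imp_Bseq[OF convergentI[OF u]] by (auto elim: BseqE)
  define R where "R = K + cmod a"
  have uR: "cmod (u n - a) \<le> R" for n using K(2)[of n] norm_triangle_ineq4[of "u n" a] unfolding R_def by linarith
  have "(\<lambda>n. integral\<^sup>L \<mu> (gk (u n))) \<longlonglongrightarrow> integral\<^sup>L \<mu> (gk a)"
  proof (rule integral_dominated_convergence[where w="\<lambda>w. exp (\<alpha> * R\<^sup>2) * S4 R (w - a)"])
    show "gk a \<in> borel_measurable \<mu>" by (intro meas_mu gk_meas)
    show "gk (u n) \<in> borel_measurable \<mu>" for n by (intro meas_mu gk_meas)
    show "integrable \<mu> (\<lambda>w. exp (\<alpha> * R\<^sup>2) * S4 R (w - a))" by (intro integrable_mult_right S4_int)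
    show "AE w in \<mu>. (\<lambda>n. gk (u n) w) \<longlonglongrightarrow> gk a w" unfolding gk_def by (intro AE_I2 tendsto_intros u) auto
    show "AE w in \<mu>. norm (gk (u n) w) \<le> exp (\<alpha> * R\<^sup>2) * S4 R (w - a)" for n
    proof (rule AE_I2)
      fix w
      have "gk (u n) w = gk (u n - a) (w - a)" by (rule gk_shift)
      also have "\<dots> \<le> exp (\<alpha> * R\<^sup>2) * S4 R (w - a)" by (rule gk_bound[OF uR])
      finally show "norm (gk (u n) w) \<le> exp (\<alpha> * R\<^sup>2) * S4 R (w - a)"
        using gk_pos[of "u n" w] by simp
    qed
  qed
  then show "(\<lambda>n. Gr (u n)) \<longlonglongrightarrow> Gr a" unfolding Gr_def .
qed

lemma Gr_lim_from:
  assumes C: "\<And>p. Br p \<le> C" and Bl: "(Br \<longlongrightarrow> 0) at_infinity"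
  shows "(Gr \<longlongrightarrow> 0) at_infinity"
proof (rule ccontr)
  assume "\<not> (Gr \<longlongrightarrow> 0) at_infinity"
  then obtain \<epsilon> where e: "\<epsilon> > 0" and ne: "\<not> eventually (\<lambda>z. dist (Gr z) 0 < \<epsilon>) at_infinity"
    unfolding tendsto_iff by auto
  have "\<forall>n::nat. \<exists>z. real n \<le> cmod z \<and> Gr z \<ge> \<epsilon>"
  proof
    fix n :: nat
    from ne have "\<not> (\<forall>x. real n \<le> norm x \<longrightarrow> dist (Gr x) 0 < \<epsilon>)" unfolding eventually_at_infinity by blast
    then show "\<exists>z. real n \<le> cmod z \<and> Gr z \<ge> \<epsilon>" using Gr_nonneg by (auto simp: dist_real_def)
  qed
  then obtain zs where zs: "\<And>n. real n \<le> cmod (zs n)" and zsG: "\<And>n. Gr (zs n) \<ge> \<epsilon>" by metis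
  define S where "S k = (\<integral>\<^sup>+ p. ennreal (cc p) * BB (zs k + lat p) \<partial>count_space UNIV)" for k
  have C0: "C \<ge> 0" using C[of 0] Br_nonneg[of 0] by linarith
  have S0: "S \<longlonglongrightarrow> (\<integral>\<^sup>+ (p::int\<times>int). 0 \<partial>count_space UNIV)" unfolding S_def
  proof (rule nn_integral_dominated_convergence[where w="\<lambda>p. ennreal (cc p) * ennreal C"
      and u="\<lambda>k p. ennreal (cc p) * BB (zs k + lat p)" and u'="\<lambda>p. 0" and M="count_space UNIV"])
    show "(\<lambda>p. ennreal (cc p) * BB (zs k + lat p)) \<in> borel_measurable (count_space UNIV)" for k by simp
    show "(\<lambda>p. 0::ennreal) \<in> borel_measurable (count_space UNIV)" by simp
    show "(\<lambda>p. ennreal (cc p) * ennreal C) \<in> borel_measurable (count_space UNIV)" by simp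
    show "AE p in count_space UNIV. ennreal (cc p) * BB (zs k + lat p) \<le> ennreal (cc p) * ennreal C" for k
      unfolding BB_Br by (intro AE_I2 mult_left_mono ennreal_leI C) auto
    have "(\<integral>\<^sup>+ p. ennreal (cc p) * ennreal C \<partial>count_space UNIV) = (\<integral>\<^sup>+ p. ennreal (cc p) \<partial>count_space UNIV) * ennreal C"
      by (rule nn_integral_multc) simp
    then show "(\<integral>\<^sup>+ p. ennreal (cc p) * ennreal C \<partial>count_space UNIV) < \<infinity>"
      using cc_fin by (simp add: ennreal_mult_less_top)
    show "AE p in count_space UNIV. (\<lambda>k. ennreal (cc p) * BB (zs k + lat p)) \<longlonglongrightarrow> 0"
    proof (rule AE_I2)
      fix p
      have fl: "filterlim (\<lambda>k. zs k + lat p) at_infinity sequentially"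
        unfolding filterlim_at_infinity[OF order_refl]
      proof (intro allI impI)
        fix r :: real assume "r > 0"
        show "eventually (\<lambda>k. r \<le> norm (zs k + lat p)) sequentially"
          unfolding eventually_sequentially
        proof (intro exI allI impI)
          fix k assume k: "k \<ge> nat \<lceil>r + cmod (lat p)\<rceil>"
          then have "real k \<ge> r + cmod (lat p)" by linarith
          moreover have "cmod (zs k) - cmod (lat p) \<le> norm (zs k + lat p)"
            by (rule norm_diff_ineq)
          ultimately show "r \<le> norm (zs k + lat p)" using zs[of k] by linarith
        qed
      qed
      have "(\<lambda>k. Br (zs k + lat p)) \<longlonglongrightarrow> 0" by (rule filterlim_compose[OF Bl fl])
      then have "(\<lambda>k. ennreal (Br (zs k + lat p))) \<longlonglongrightarrow> ennreal 0" by (rule tendsto_ennrealI)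
      then have "(\<lambda>k. ennreal (cc p) * ennreal (Br (zs k + lat p))) \<longlonglongrightarrow> ennreal (cc p) * ennreal 0"
        by (intro ennreal_tendsto_cmult) auto
      then show "(\<lambda>k. ennreal (cc p) * BB (zs k + lat p)) \<longlonglongrightarrow> 0" unfolding BB_Br by simp
    qed
  qed
  have G_le: "ennreal (Gr (zs k)) \<le> S k" for k unfolding S_def G_Gr[symmetric] by (rule G_le_lat)
  have "(\<lambda>k. ennreal (Gr (zs k))) \<longlonglongrightarrow> 0"
    by (rule tendsto_sandwich[OF always_eventually always_eventually tendsto_const, of _ "\<lambda>k. ennreal (Gr (zs k))" S])
       (use G_le S0 in auto)
  then have "(\<lambda>k. ennreal (Gr (zs k))) \<longlonglongrightarrow> ennreal 0" by simp
  then have "(\<lambda>k. Gr (zs k)) \<longlonglongrightarrow> 0" using Gr_nonneg by (subst (asm) tendsto_ennreal_iff) auto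
  then obtain N where NN: "\<And>k. k \<ge> N \<Longrightarrow> norm (Gr (zs k) - 0) < \<epsilon>" using LIMSEQ_D e by metis
  have "\<bar>Gr (zs N)\<bar> < \<epsilon>" using NN[of N] by simp
  then show False using zsG[of N] by linarith
qed

end

context fock begin

lemma forward:
  assumes cmp: "fock_inf_compact \<alpha> (toeplitz \<alpha> \<mu>)"
  shows "in_C0 (mu_tilde1 \<alpha> \<mu>)"
proof -
  obtain C0 where C0: "\<And>f. f \<in> fock_inf \<alpha> \<Longrightarrow> fock_inf_norm \<alpha> f \<le> 1 \<Longrightarrow> fock_inf_norm \<alpha> (toeplitz \<alpha> \<mu> f) \<le> C0"
    using compact_bounded[OF cmp] by blast
  have maps: "\<And>f. f \<in> fock_inf \<alpha> \<Longrightarrow> toeplitz \<alpha> \<mu> f \<in> fock_inf \<alpha>" using cmp unfolding fock_inf_compact_def by blast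
  have BrC: "Br p \<le> C0" for p
  proof -
    have "Br p = cmod (toeplitz \<alpha> \<mu> (ka p) p) * exp (- \<alpha> * (cmod p)\<^sup>2 / 2)" by (rule T_ka[symmetric])
    also have "\<dots> \<le> fock_inf_norm \<alpha> (toeplitz \<alpha> \<mu> (ka p))" by (rule norm_upper[OF maps[OF ka_fi]])
    also have "\<dots> \<le> C0" by (rule C0[OF ka_fi ka_normle])
    finally show ?thesis .
  qed
  have Gfin: "G z < \<infinity>" for z by (rule G_fin_from[OF BrC])
  have "fock_fin \<alpha> \<mu>" unfolding fock_fin_def fock_fin_axioms_def using Gfin fock_axioms by auto
  then interpret ff: fock_fin \<alpha> \<mu> .
  have Bl: "(Br \<longlongrightarrow> 0) at_infinity" by (rule ff.Br_lim[OF cmp])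
  have Gl: "(ff.Gr \<longlongrightarrow> 0) at_infinity" by (rule ff.Gr_lim_from[OF BrC Bl])
  have Gc: "continuous_on UNIV ff.Gr" by (rule ff.Gr_cont)
  have eq: "enn2real (mu_tilde1 \<alpha> \<mu> z) = \<alpha> / pi * ff.Gr z" for z
    unfolding mu_tilde1_G ff.G_Gr using apos ff.Gr_nonneg[of z]
    by (simp add: ennreal_mult[symmetric] enn2real_mult)
  show ?thesis unfolding in_C0_def
  proof (intro conjI allI)
    show "mu_tilde1 \<alpha> \<mu> z < \<infinity>" for z unfolding mu_tilde1_G ff.G_Gr by (simp add: ennreal_mult_less_top)
    show "continuous_on UNIV (\<lambda>z. enn2real (mu_tilde1 \<alpha> \<mu> z))"
      unfolding eq by (intro continuous_on_mult_left Gc)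
    have "((\<lambda>z. \<alpha> / pi * ff.Gr z) \<longlongrightarrow> \<alpha> / pi * 0) at_infinity" by (intro tendsto_mult_left Gl)
    then show "((\<lambda>z. enn2real (mu_tilde1 \<alpha> \<mu> z)) \<longlongrightarrow> 0) at_infinity" unfolding eq by simp
  qed
qed

lemma backward:
  assumes c0: "in_C0 (mu_tilde1 \<alpha> \<mu>)"
  shows "fock_inf_compact \<alpha> (toeplitz \<alpha> \<mu>)"
proof -
  have ap: "\<alpha> / pi > 0" using apos by simp
  have Gfin: "G z < \<infinity>" for z
  proof -
    have "ennreal (\<alpha> / pi) * G z < \<infinity>" using c0 unfolding in_C0_def mu_tilde1_G by blast
    then show ?thesis using ap by (auto simp: ennreal_mult_less_top)
  qed
  have "fock_fin \<alpha> \<mu>" unfolding fock_fin_def fock_fin_axioms_def using Gfin fock_axioms by auto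
  then interpret ff: fock_fin \<alpha> \<mu> .
  have eq: "ff.Gr z = pi / \<alpha> * enn2real (mu_tilde1 \<alpha> \<mu> z)" for z
    unfolding mu_tilde1_G ff.G_Gr using apos ff.Gr_nonneg[of z]
    by (simp add: ennreal_mult[symmetric] enn2real_mult)
  have Gc: "continuous_on UNIV ff.Gr"
    unfolding eq using c0 unfolding in_C0_def by (intro continuous_on_mult_left) auto
  have "((\<lambda>z. pi / \<alpha> * enn2real (mu_tilde1 \<alpha> \<mu> z)) \<longlongrightarrow> pi / \<alpha> * 0) at_infinity"
    using c0 unfolding in_C0_def by (intro tendsto_mult_left) auto
  then have Gl: "(ff.Gr \<longlongrightarrow> 0) at_infinity" unfolding eq[abs_def] by simp
  have "fock_c0 \<alpha> \<mu>" unfolding fock_c0_def fock_c0_axioms_def using Gc Gl \<open>fock_fin \<alpha> \<mu>\<close> by auto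
  then interpret fc: fock_c0 \<alpha> \<mu> .
  show ?thesis by (rule fc.compact_T)
qed

end

theorem theorem4p2:
  fixes \<alpha> :: real and \<mu> :: "complex measure"
  assumes "\<alpha> > 0"
    and "sets \<mu> = sets borel"
    and "condition_M \<alpha> \<mu>"
  shows "fock_inf_compact \<alpha> (toeplitz \<alpha> \<mu>) \<longleftrightarrow> in_C0 (mu_tilde1 \<alpha> \<mu>)"
proof -
  interpret fock \<alpha> \<mu> using assms by unfold_locales
  show ?thesis using forward backward by blast
qed

end
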